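(* Let $\Gamma$ be a rationally metrised graph and $\mu\in\mathcal M^0(\Gamma)$. For any fixed rational vertex $b$, the function $f(x)=\langle x-b,\mu\rangle$ on rational vertices $x$ is piecewise polynomial with log poles on the half-edges, and $\Delta(f)=\mu$.
   Context: Rationally metrised graph: finite sets of vertices $V$, oriented edges $E$, half-edges $D$, source map $s$, fixed-point-free involution $e\mapsto e^{-1}$ on $E$, $t(e)=s(e^{-1})$, connected, lengths $\ell(e)=\ell(e^{-1})\in\mathbb Q_{>0}$; $E^+$ = unoriented edges. Rational vertices are points at rational distance along edges or half-edges; all constructions are compatible with subdividing edges at rational points, so rational vertices may be treated as vertices (and a vertex $x$ as the delta measure at $x$). A measure (piecewise polynomial with log poles on $D$) is a formal sum $\mu=\sum_{e\in E}g_e(s_e)|ds_e|+\sum_{v\in V}\lambda_v v+\sum_{e\in D}\lambda_e e$ with $g_e\in\mathbb Q[s_e]$, $g_{e^{-1}}(s)=g_e(\ell(e)-s)$, $\lambda_v,\lambda_e\in\mathbb Q$; $\mathcal M^0(\Gamma)$ consists of those with $\sum_{e\in E^+}\int_0^{\ell(e)}g_e+\sum_v\lambda_v+\sum_{e\in D}\lambda_e=0$. $\Omega_{\log}(\Gamma)$ is the space of functions $f$ on rational vertices whose restriction $f_e$ to each edge is a polynomial in arc length and to each half-edge an affine function. The Laplacian $\Delta\colon\Omega_{\log}\to\mathcal M(\Gamma)$ is $\Delta f=-\sum_{e\in E}f_e''|ds_e|-\sum_v\left(\sum_{s(e)=v}f_e'(0)\right)v+\sum_{e\in D}f'_e\,e$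 (sum over edges and half-edges with source $v$). $\Delta$ has kernel the constants and image $\mathcal M^0(\Gamma)$. Integration: $\int f\,d\mu=\sum_{e\in E^+}\int_0^{\ell(e)}f_eg_e\,ds_e+\sum_v\lambda_vf(v)+\sum_{e\in D}\lambda_ef(s(e))$. Height pairing on $\mathcal M^0$: $\langle\mu,\nu\rangle=\int\Delta^{-1}(\mu)\,d\nu$ for any preimage $\Delta^{-1}(\mu)$ (independent of choice; symmetric). *)

theory Defs
  imports Main "HOL-Computational_Algebra.Polynomial"
begin

text \<open>Oriented edges and half-edges live in a common type 'e; edges are the set
  edges, half-edges the set hedges.  inv is the involution e to e^{-1},
  len the length of an edge.\<close>

record ('v, 'e) rmg =
  verts  :: "'v set"
  edges  :: "'e set"
  hedges :: "'e set"
  src    :: "'e \<Rightarrow> 'v"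
  inv    :: "'e \<Rightarrow> 'e"
  len    :: "'e \<Rightarrow> rat"

definition tgt :: "('v, 'e) rmg \<Rightarrow> 'e \<Rightarrow> 'v" where
  "tgt G e = src G (inv G e)"

definition rm_graph :: "('v, 'e) rmg \<Rightarrow> bool" where
  "rm_graph G \<longleftrightarrow>
     finite (verts G) \<and> finite (edges G) \<and> finite (hedges G) \<and>
     edges G \<inter> hedges G = {} \<and>
     (\<forall>e \<in> edges G \<union> hedges G. src G e \<in> verts G) \<and>
     (\<forall>e \<in> edges G. inv G e \<in> edges G \<and> inv G e \<noteq> e \<and> inv G (inv G e) = e) \<and>
     (\<forall>e \<in> edges G. len G e > 0 \<and> len G (inv G e) = len G e) \<and>
     (\<forall>u \<in> verts G. \<forall>v \<in> verts G.
        (u, v) \<in> {(src G e, tgt G e) | e. e \<in> edges G}\<^sup>*)"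

text \<open>A rational vertex is either a vertex, or the point at rational distance t
  from the source along an edge (0 <= t <= len e) or along a half-edge (t >= 0).\<close>

datatype ('v, 'e) pt = Vx 'v | Ep 'e rat

fun valid_pt :: "('v, 'e) rmg \<Rightarrow> ('v, 'e) pt \<Rightarrow> bool" where
  "valid_pt G (Vx v) = (v \<in> verts G)"
| "valid_pt G (Ep e t) =
     ((e \<in> edges G \<and> 0 \<le> t \<and> t \<le> len G e) \<or> (e \<in> hedges G \<and> 0 \<le> t))"

fun cpt :: "('v, 'e) rmg \<Rightarrow> ('v, 'e) pt \<Rightarrow> ('v, 'e) pt" where
  "cpt G (Vx v) = Vx v"
| "cpt G (Ep e t) =
     (if t = 0 then Vx (src G e)
      else if e \<in> edges G \<and> t = len G e then Vx (tgt G e) else Ep e t)"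

definition same_pt :: "('v, 'e) rmg \<Rightarrow> ('v, 'e) pt \<Rightarrow> ('v, 'e) pt \<Rightarrow> bool" where
  "same_pt G p q \<longleftrightarrow> cpt G p = cpt G q \<or>
     (\<exists>e t. e \<in> edges G \<and> 0 < t \<and> t < len G e \<and>
            cpt G p = Ep e t \<and> cpt G q = Ep (inv G e) (len G e - t))"

definition dlt :: "('v, 'e) rmg \<Rightarrow> ('v, 'e) pt \<Rightarrow> ('v, 'e) pt \<Rightarrow> rat" where
  "dlt G x p = (if same_pt G x p then 1 else 0)"

text \<open>A function on rational vertices: compatible with the identifications.\<close>
definition resp :: "('v, 'e) rmg \<Rightarrow> (('v, 'e) pt \<Rightarrow> rat) \<Rightarrow> bool" where
  "resp G f \<longleftrightarrow>
     (\<forall>e \<in> edges G \<union> hedges G. f (Ep e 0) = f (Vx (src G e))) \<and>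
     (\<forall>e \<in> edges G. \<forall>t. 0 \<le> t \<and> t \<le> len G e \<longrightarrow>
         f (Ep e t) = f (Ep (inv G e) (len G e - t)))"

definition cuts :: "('v, 'e) rmg \<Rightarrow> ('v, 'e) pt set \<Rightarrow> 'e \<Rightarrow> rat set" where
  "cuts G P e = {t. 0 < t \<and> (e \<in> edges G \<longrightarrow> t < len G e) \<and>
                    (\<exists>p \<in> P. same_pt G (Ep e t) p)}"

definition ecuts :: "('v, 'e) rmg \<Rightarrow> ('v, 'e) pt set \<Rightarrow> 'e \<Rightarrow> rat set" where
  "ecuts G P e = {0, len G e} \<union> cuts G P e"

text \<open>Start of the (unbounded) half-edge of the subdivided graph lying on the
  half-edge d.\<close>
definition tailst :: "('v, 'e) rmg \<Rightarrow> ('v, 'e) pt set \<Rightarrow> 'e \<Rightarrow> rat" where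
  "tailst G P d = Max ({0} \<union> cuts G P d)"

definition consec :: "rat set \<Rightarrow> (rat \<times> rat) set" where
  "consec C = {(a, c). a \<in> C \<and> c \<in> C \<and> a < c \<and> \<not> (\<exists>m \<in> C. a < m \<and> m < c)}"

text \<open>Omega_log of the graph subdivided at P: polynomial on every segment of an edge,
  polynomial on every bounded segment of a half-edge, affine on the final
  unbounded piece of a half-edge.\<close>
definition omega_logP :: "('v, 'e) rmg \<Rightarrow> ('v, 'e) pt set \<Rightarrow> (('v, 'e) pt \<Rightarrow> rat) \<Rightarrow> bool" where
  "omega_logP G P f \<longleftrightarrow> resp G f \<and>
     (\<forall>e \<in> edges G. \<forall>(a, c) \<in> consec (ecuts G P e).
        \<exists>p. \<forall>s. a \<le> s \<and> s \<le> c \<longrightarrow> f (Ep e s) = poly p s) \<and>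
     (\<forall>d \<in> hedges G. \<forall>(a, c) \<in> consec ({0} \<union> cuts G P d).
        \<exists>p. \<forall>s. a \<le> s \<and> s \<le> c \<longrightarrow> f (Ep d s) = poly p s) \<and>
     (\<forall>d \<in> hedges G. \<exists>\<alpha> \<beta>. \<forall>s. tailst G P d \<le> s \<longrightarrow> f (Ep d s) = \<alpha> + \<beta> * s)"

definition omega_log :: "('v, 'e) rmg \<Rightarrow> (('v, 'e) pt \<Rightarrow> rat) \<Rightarrow> bool" where
  "omega_log G f \<longleftrightarrow> omega_logP G {} f"

definition dplus :: "(('v, 'e) pt \<Rightarrow> rat) \<Rightarrow> 'e \<Rightarrow> rat \<Rightarrow> rat" where
  "dplus f e t = poly (pderiv (THE p. \<exists>\<epsilon>>0. \<forall>s. t \<le> s \<and> s \<le> t + \<epsilon> \<longrightarrow> f (Ep e s) = poly p s)) t"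

definition dminus :: "(('v, 'e) pt \<Rightarrow> rat) \<Rightarrow> 'e \<Rightarrow> rat \<Rightarrow> rat" where
  "dminus f e t = poly (pderiv (THE p. \<exists>\<epsilon>>0. \<forall>s. t - \<epsilon> \<le> s \<and> s \<le> t \<longrightarrow> f (Ep e s) = poly p s)) t"

definition dd :: "(('v, 'e) pt \<Rightarrow> rat) \<Rightarrow> 'e \<Rightarrow> rat \<Rightarrow> rat" where
  "dd f e t = poly (pderiv (pderiv
      (THE p. \<exists>\<epsilon>>0. \<forall>s. t - \<epsilon> \<le> s \<and> s \<le> t + \<epsilon> \<longrightarrow> f (Ep e s) = poly p s))) t"

record ('v, 'e) meas =
  dens :: "'e \<Rightarrow> rat poly"
  vm   :: "'v \<Rightarrow> rat"
  hm   :: "'e \<Rightarrow> rat"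

definition polyint :: "rat poly \<Rightarrow> rat \<Rightarrow> rat \<Rightarrow> rat" where
  "polyint p a c = (\<Sum>i\<le>degree p. coeff p i * (c ^ (i + 1) - a ^ (i + 1)) / of_nat (i + 1))"

text \<open>Measures on Gamma (piecewise polynomial with log poles on the half-edges).
  Coefficients outside the relevant index sets are normalised to 0.\<close>
definition is_meas :: "('v, 'e) rmg \<Rightarrow> ('v, 'e) meas \<Rightarrow> bool" where
  "is_meas G \<mu> \<longleftrightarrow>
     (\<forall>e \<in> edges G. dens \<mu> (inv G e) = pcompose (dens \<mu> e) [:len G e, -1:]) \<and>
     (\<forall>e. e \<notin> edges G \<longrightarrow> dens \<mu> e = 0) \<and>
     (\<forall>v. v \<notin> verts G \<longrightarrow> vm \<mu> v = 0) \<and>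
     (\<forall>e. e \<notin> hedges G \<longrightarrow> hm \<mu> e = 0)"

text \<open>Sum over unoriented edges written as half the sum over oriented edges.\<close>
definition total_mass :: "('v, 'e) rmg \<Rightarrow> ('v, 'e) meas \<Rightarrow> rat" where
  "total_mass G \<mu> = (\<Sum>e\<in>edges G. polyint (dens \<mu> e) 0 (len G e)) / 2
     + (\<Sum>v\<in>verts G. vm \<mu> v) + (\<Sum>e\<in>hedges G. hm \<mu> e)"

definition M0 :: "('v, 'e) rmg \<Rightarrow> ('v, 'e) meas set" where
  "M0 G = {\<mu>. is_meas G \<mu> \<and> total_mass G \<mu> = 0}"

definition fpoly :: "('v, 'e) rmg \<Rightarrow> (('v, 'e) pt \<Rightarrow> rat) \<Rightarrow> 'e \<Rightarrow> rat poly" where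
  "fpoly G f e =
     (if e \<in> edges G then (THE p. \<forall>s. 0 \<le> s \<and> s \<le> len G e \<longrightarrow> f (Ep e s) = poly p s)
      else (THE p. \<forall>s. 0 \<le> s \<longrightarrow> f (Ep e s) = poly p s))"

definition lap :: "('v, 'e) rmg \<Rightarrow> (('v, 'e) pt \<Rightarrow> rat) \<Rightarrow> ('v, 'e) meas" where
  "lap G f =
     \<lparr> dens = (\<lambda>e. if e \<in> edges G then - pderiv (pderiv (fpoly G f e)) else 0),
       vm = (\<lambda>v. if v \<in> verts G then
                   - (\<Sum>e \<in> {e \<in> edges G \<union> hedges G. src G e = v}. poly (pderiv (fpoly G f e)) 0)
                 else 0),
       hm = (\<lambda>e. if e \<in> hedges G then poly (pderiv (fpoly G f e)) 0 else 0) \<rparr>"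

text \<open>Componentwise: no density on the open segments, the prescribed point
  masses at the vertices of the subdivided graph (old vertices and the new
  vertices coming from x and b), and no mass on the half-edges.\<close>
definition lap_is_dipole ::
  "('v, 'e) rmg \<Rightarrow> ('v, 'e) pt \<Rightarrow> ('v, 'e) pt \<Rightarrow> (('v, 'e) pt \<Rightarrow> rat) \<Rightarrow> bool" where
  "lap_is_dipole G x b F \<longleftrightarrow>
     (\<forall>e \<in> edges G \<union> hedges G. \<forall>t. 0 < t \<and> (e \<in> edges G \<longrightarrow> t < len G e) \<and>
         t \<notin> cuts G {x, b} e \<longrightarrow> - dd F e t = 0) \<and>
     (\<forall>v \<in> verts G.
         - (\<Sum>e \<in> {e \<in> edges G \<union> hedges G. src G e = v}. dplus F e 0)
         = dlt G x (Vx v) - dlt G b (Vx v)) \<and>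
     (\<forall>e \<in> edges G \<union> hedges G. \<forall>t \<in> cuts G {x, b} e.
         - (dplus F e t - dminus F e t) = dlt G x (Ep e t) - dlt G b (Ep e t)) \<and>
     (\<forall>d \<in> hedges G. dplus F d (tailst G {x, b} d) = 0)"

text \<open>Integration of a function of Omega_log(Gamma_P) against a measure of Gamma
  transported to the subdivision Gamma_P (the half-edge masses sit at the
  half-edge of Gamma_P, whose source is the point at position tailst).\<close>
definition piece :: "(('v, 'e) pt \<Rightarrow> rat) \<Rightarrow> 'e \<Rightarrow> rat \<Rightarrow> rat \<Rightarrow> rat poly" where
  "piece F e a c = (THE p. \<forall>s. a \<le> s \<and> s \<le> c \<longrightarrow> F (Ep e s) = poly p s)"

definition integP ::
  "('v, 'e) rmg \<Rightarrow> ('v, 'e) pt set \<Rightarrow> (('v, 'e) pt \<Rightarrow> rat) \<Rightarrow> ('v, 'e) meas \<Rightarrow> rat" where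
  "integP G P F \<mu> =
     (\<Sum>e\<in>edges G. \<Sum>(a, c) \<in> consec (ecuts G P e). polyint (piece F e a c * dens \<mu> e) a c) / 2
     + (\<Sum>v\<in>verts G. vm \<mu> v * F (Vx v))
     + (\<Sum>d\<in>hedges G. hm \<mu> d * F (Ep d (tailst G P d)))"

text \<open>Height pairing <x - b, mu> = integral of Delta^{-1}(x - b) against mu,
  computed on the subdivision at {x, b}.\<close>
definition pair_pt :: "('v, 'e) rmg \<Rightarrow> ('v, 'e) pt \<Rightarrow> ('v, 'e) pt \<Rightarrow> ('v, 'e) meas \<Rightarrow> rat" where
  "pair_pt G x b \<mu> =
     integP G {x, b} (SOME F. omega_logP G {x, b} F \<and> lap_is_dipole G x b F) \<mu>"

end

theory Submission
  imports Defs
begin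

lemma poly_eq_on_interval:
  fixes p q :: "rat poly"
  assumes "a < c" and "\<And>s. a \<le> s \<Longrightarrow> s \<le> c \<Longrightarrow> poly p s = poly q s"
  shows "p = q"
proof (rule ccontr)
  assume "p \<noteq> q"
  hence "p - q \<noteq> 0" by simp
  hence "finite {x. poly (p - q) x = 0}" by (rule poly_roots_finite)
  moreover have "{a..c} \<subseteq> {x. poly (p - q) x = 0}" using assms(2) by auto
  ultimately have "finite {a..c}" by (rule finite_subset[rotated])
  thus False using assms(1) infinite_Icc by blast
qed

lemma pderiv_zero_const:
  fixes p :: "rat poly"
  assumes "pderiv p = 0" shows "poly p x = poly p y"
proof -
  have "degree p = 0" using assms pderiv_eq_0_iff by blast
  then obtain a where "p = [:a:]" using degree0_coeffs by blast
  thus ?thesis by simp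
qed

lemma pderiv2_zero_const_deriv:
  fixes p :: "rat poly"
  assumes "pderiv (pderiv p) = 0"
  shows "pderiv p = [:poly (pderiv p) 0:]"
proof -
  have "degree (pderiv p) = 0" using assms pderiv_eq_0_iff by blast
  then obtain a where "pderiv p = [:a:]" using degree0_coeffs by blast
  thus ?thesis by simp
qed

lemma pderiv2_zero_linear:
  fixes p :: "rat poly"
  assumes "pderiv (pderiv p) = 0"
  shows "poly p x = poly p 0 + poly (pderiv p) 0 * x"
proof -
  define \<sigma> where "\<sigma> = poly (pderiv p) 0"
  have d: "pderiv p = [:\<sigma>:]" unfolding \<sigma>_def by (rule pderiv2_zero_const_deriv[OF assms])
  have "pderiv (p - [:0, \<sigma>:]) = 0" using d by (simp add: pderiv_diff pderiv_pCons)
  hence "poly (p - [:0, \<sigma>:]) x = poly (p - [:0, \<sigma>:]) 0" by (rule pderiv_zero_const)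
  thus ?thesis unfolding \<sigma>_def[symmetric] by (simp add: algebra_simps)
qed

definition antider :: "rat poly \<Rightarrow> rat poly" where
  "antider p = (\<Sum>i\<le>degree p. monom (coeff p i / of_nat (i + 1)) (i + 1))"

lemma pderiv_antider: "pderiv (antider p) = p"
proof -
  have "pderiv (antider p) = (\<Sum>i\<le>degree p. pderiv (monom (coeff p i / of_nat (i + 1)) (i + 1)))"
    unfolding antider_def using higher_pderiv_sum[of 1] by simp
  also have "\<dots> = (\<Sum>i\<le>degree p. monom (coeff p i) i)"
    by (intro sum.cong refl) (simp add: pderiv_monom del: of_nat_Suc)
  also have "\<dots> = p" by (rule poly_as_sum_of_monoms)
  finally show ?thesis .
qed

lemma polyint_antider: "polyint p a c = poly (antider p) c - poly (antider p) a"
  unfolding polyint_def antider_def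
  by (simp add: poly_sum poly_monom sum_subtractf[symmetric] diff_divide_distrib algebra_simps)

lemma polyint_ftc:
  assumes "pderiv P = p"
  shows "polyint p a c = poly P c - poly P a"
proof -
  have "pderiv (P - antider p) = 0" using assms by (simp add: pderiv_diff pderiv_antider)
  hence "poly (P - antider p) c = poly (P - antider p) a" by (rule pderiv_zero_const)
  thus ?thesis by (simp add: polyint_antider)
qed

lemma polyint_green:
  fixes f q :: "rat poly"
  assumes "pderiv (pderiv f) = 0"
  shows "polyint (f * - pderiv (pderiv q)) a c
    = (poly (pderiv f) c * poly q c - poly f c * poly (pderiv q) c)
      - (poly (pderiv f) a * poly q a - poly f a * poly (pderiv q) a)"
proof -
  define \<sigma> where "\<sigma> = poly (pderiv f) 0"
  have d: "pderiv f = [:\<sigma>:]" unfolding \<sigma>_def by (rule pderiv2_zero_const_deriv[OF assms])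
  have "pderiv (smult \<sigma> q - f * pderiv q) = f * - pderiv (pderiv q)"
    using d by (simp add: pderiv_diff pderiv_mult pderiv_smult algebra_simps)
  hence "polyint (f * - pderiv (pderiv q)) a c = poly (smult \<sigma> q - f * pderiv q) c - poly (smult \<sigma> q - f * pderiv q) a"
    by (intro polyint_ftc)
  thus ?thesis using d by simp
qed

lemma pderiv_reflect:
  fixes p :: "rat poly"
  shows "pderiv (pcompose p [:l, -1:]) = - pcompose (pderiv p) [:l, -1:]"
  by (simp add: pderiv_pcompose pderiv_pCons)

lemma poly_reflect [simp]: "poly (pcompose p [:l, -1:]) s = poly p (l - (s::rat))"
proof -
  have "l + s * - 1 = l - s" by simp
  thus ?thesis by (simp add: poly_pcompose)
qed

lemma dplus_eq:
  assumes "\<epsilon> > 0" and "\<And>s. t \<le> s \<Longrightarrow> s \<le> t + \<epsilon> \<Longrightarrow> f (Ep e s) = poly p s"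
  shows "dplus f e t = poly (pderiv p) t"
proof -
  have "(THE p. \<exists>\<epsilon>>0. \<forall>s. t \<le> s \<and> s \<le> t + \<epsilon> \<longrightarrow> f (Ep e s) = poly p s) = p"
  proof (rule the_equality)
    show "\<exists>\<epsilon>>0. \<forall>s. t \<le> s \<and> s \<le> t + \<epsilon> \<longrightarrow> f (Ep e s) = poly p s" using assms by blast
  next
    fix q assume "\<exists>\<epsilon>>0. \<forall>s. t \<le> s \<and> s \<le> t + \<epsilon> \<longrightarrow> f (Ep e s) = poly q s"
    then obtain \<epsilon>' where e': "\<epsilon>' > 0" "\<forall>s. t \<le> s \<and> s \<le> t + \<epsilon>' \<longrightarrow> f (Ep e s) = poly q s" by blast
    show "q = p"
    proof (rule poly_eq_on_interval[of t "t + min \<epsilon> \<epsilon>'"])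
      show "t < t + min \<epsilon> \<epsilon>'" using assms(1) e'(1) by simp
    next
      fix s assume "t \<le> s" "s \<le> t + min \<epsilon> \<epsilon>'"
      thus "poly q s = poly p s" using assms(2)[of s] e'(2) by simp
    qed
  qed
  thus ?thesis unfolding dplus_def by simp
qed

lemma dminus_eq:
  assumes "\<epsilon> > 0" and "\<And>s. t - \<epsilon> \<le> s \<Longrightarrow> s \<le> t \<Longrightarrow> f (Ep e s) = poly p s"
  shows "dminus f e t = poly (pderiv p) t"
proof -
  have "(THE p. \<exists>\<epsilon>>0. \<forall>s. t - \<epsilon> \<le> s \<and> s \<le> t \<longrightarrow> f (Ep e s) = poly p s) = p"
  proof (rule the_equality)
    show "\<exists>\<epsilon>>0. \<forall>s. t - \<epsilon> \<le> s \<and> s \<le> t \<longrightarrow> f (Ep e s) = poly p s" using assms by blast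
  next
    fix q assume "\<exists>\<epsilon>>0. \<forall>s. t - \<epsilon> \<le> s \<and> s \<le> t \<longrightarrow> f (Ep e s) = poly q s"
    then obtain \<epsilon>' where e': "\<epsilon>' > 0" "\<forall>s. t - \<epsilon>' \<le> s \<and> s \<le> t \<longrightarrow> f (Ep e s) = poly q s" by blast
    show "q = p"
    proof (rule poly_eq_on_interval[of "t - min \<epsilon> \<epsilon>'" t])
      show "t - min \<epsilon> \<epsilon>' < t" using assms(1) e'(1) by simp
    next
      fix s assume "t - min \<epsilon> \<epsilon>' \<le> s" "s \<le> t"
      thus "poly q s = poly p s" using assms(2)[of s] e'(2) by simp
    qed
  qed
  thus ?thesis unfolding dminus_def by simp
qed

lemma dd_eq:
  assumes "\<epsilon> > 0" and "\<And>s. t - \<epsilon> \<le> s \<Longrightarrow> s \<le> t + \<epsilon> \<Longrightarrow> f (Ep e s) = poly p s"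
  shows "dd f e t = poly (pderiv (pderiv p)) t"
proof -
  have "(THE p. \<exists>\<epsilon>>0. \<forall>s. t - \<epsilon> \<le> s \<and> s \<le> t + \<epsilon> \<longrightarrow> f (Ep e s) = poly p s) = p"
  proof (rule the_equality)
    show "\<exists>\<epsilon>>0. \<forall>s. t - \<epsilon> \<le> s \<and> s \<le> t + \<epsilon> \<longrightarrow> f (Ep e s) = poly p s" using assms by blast
  next
    fix q assume "\<exists>\<epsilon>>0. \<forall>s. t - \<epsilon> \<le> s \<and> s \<le> t + \<epsilon> \<longrightarrow> f (Ep e s) = poly q s"
    then obtain \<epsilon>' where e': "\<epsilon>' > 0" "\<forall>s. t - \<epsilon>' \<le> s \<and> s \<le> t + \<epsilon>' \<longrightarrow> f (Ep e s) = poly q s" by blast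
    show "q = p"
    proof (rule poly_eq_on_interval[of t "t + min \<epsilon> \<epsilon>'"])
      show "t < t + min \<epsilon> \<epsilon>'" using assms(1) e'(1) by simp
    next
      fix s assume "t \<le> s" "s \<le> t + min \<epsilon> \<epsilon>'"
      thus "poly q s = poly p s" using assms(1) assms(2)[of s] e' by simp
    qed
  qed
  thus ?thesis unfolding dd_def by simp
qed

lemma piece_eq:
  assumes "a < c" and "\<And>s. a \<le> s \<Longrightarrow> s \<le> c \<Longrightarrow> F (Ep e s) = poly p s"
  shows "piece F e a c = p"
  unfolding piece_def
proof (rule the_equality)
  show "\<forall>s. a \<le> s \<and> s \<le> c \<longrightarrow> F (Ep e s) = poly p s" using assms by blast
next
  fix q assume "\<forall>s. a \<le> s \<and> s \<le> c \<longrightarrow> F (Ep e s) = poly q s"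
  thus "q = p" using assms by (intro poly_eq_on_interval[of a c]) auto
qed

lemma fpoly_edge:
  assumes "e \<in> edges G" "len G e > 0" and "\<And>s. 0 \<le> s \<Longrightarrow> s \<le> len G e \<Longrightarrow> f (Ep e s) = poly p s"
  shows "fpoly G f e = p"
proof -
  have "(THE p. \<forall>s. 0 \<le> s \<and> s \<le> len G e \<longrightarrow> f (Ep e s) = poly p s) = p"
  proof (rule the_equality)
    show "\<forall>s. 0 \<le> s \<and> s \<le> len G e \<longrightarrow> f (Ep e s) = poly p s" using assms by blast
  next
    fix q assume "\<forall>s. 0 \<le> s \<and> s \<le> len G e \<longrightarrow> f (Ep e s) = poly q s"
    thus "q = p" using assms by (intro poly_eq_on_interval[of 0 "len G e"]) auto
  qed
  thus ?thesis unfolding fpoly_def using assms(1) by simp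
qed

lemma fpoly_hedge:
  assumes "e \<notin> edges G" and "\<And>s. 0 \<le> s \<Longrightarrow> f (Ep e s) = poly p s"
  shows "fpoly G f e = p"
proof -
  have "(THE p. \<forall>s. 0 \<le> s \<longrightarrow> f (Ep e s) = poly p s) = p"
  proof (rule the_equality)
    show "\<forall>s. 0 \<le> s \<longrightarrow> f (Ep e s) = poly p s" using assms by blast
  next
    fix q assume "\<forall>s. 0 \<le> s \<longrightarrow> f (Ep e s) = poly q s"
    thus "q = p" using assms by (intro poly_eq_on_interval[of 0 1]) auto
  qed
  thus ?thesis unfolding fpoly_def using assms(1) by simp
qed

lemma consec_mem: "(a, c) \<in> consec C \<longleftrightarrow> a \<in> C \<and> c \<in> C \<and> a < c \<and> \<not> (\<exists>m \<in> C. a < m \<and> m < c)"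
  unfolding consec_def by simp

lemma consec_sub: "consec C \<subseteq> C \<times> C"
  unfolding consec_def by auto

lemma finite_consec: "finite C \<Longrightarrow> finite (consec C)"
  using consec_sub by (metis finite_SigmaI finite_subset)

lemma consec_between: "(a, c) \<in> consec C \<Longrightarrow> t \<in> C \<Longrightarrow> c \<le> t \<or> t \<le> (a::rat)"
  unfolding consec_def by force

lemma consec_left:
  fixes C :: "rat set"
  assumes "finite C" "c \<in> C" "Min C < c"
  shows "(Max {y \<in> C. y < c}, c) \<in> consec C"
proof -
  have "C \<noteq> {}" using assms by auto
  hence ne: "{y \<in> C. y < c} \<noteq> {}" using assms Min_in[of C] by (metis (mono_tags, lifting) empty_Collect_eq)
  have fin: "finite {y \<in> C. y < c}" using assms by simp
  have M: "Max {y \<in> C. y < c} \<in> {y \<in> C. y < c}" using Max_in[OF fin ne] .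
  have ge: "\<And>m. m \<in> C \<Longrightarrow> m < c \<Longrightarrow> m \<le> Max {y \<in> C. y < c}" using fin by (intro Max_ge) auto
  show ?thesis unfolding consec_mem
  proof (intro conjI)
    show "\<not> (\<exists>m\<in>C. Max {y \<in> C. y < c} < m \<and> m < c)" using ge by (meson leD)
  qed (use M assms in auto)
qed

lemma consec_right:
  fixes C :: "rat set"
  assumes "finite C" "a \<in> C" "a < Max C"
  shows "(a, Min {y \<in> C. a < y}) \<in> consec C"
proof -
  have "C \<noteq> {}" using assms by auto
  hence ne: "{y \<in> C. a < y} \<noteq> {}" using assms Max_in[of C] by (metis (mono_tags, lifting) empty_Collect_eq)
  have fin: "finite {y \<in> C. a < y}" using assms by simp
  have M: "Min {y \<in> C. a < y} \<in> {y \<in> C. a < y}" using Min_in[OF fin ne] .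
  have ge: "\<And>m. m \<in> C \<Longrightarrow> a < m \<Longrightarrow> Min {y \<in> C. a < y} \<le> m" using fin by (intro Min_le) auto
  show ?thesis unfolding consec_mem
  proof (intro conjI)
    show "\<not> (\<exists>m\<in>C. a < m \<and> m < Min {y \<in> C. a < y})" using ge by (meson leD)
  qed (use M assms in auto)
qed

lemma consec_snd_bij:
  fixes C :: "rat set"
  assumes "finite C"
  shows "bij_betw snd (consec C) (C - {Min C})"
proof (rule bij_betwI')
  fix x y assume "x \<in> consec C" "y \<in> consec C"
  then obtain a c a' c' where xy: "x = (a, c)" "y = (a', c')" "(a, c) \<in> consec C" "(a', c') \<in> consec C"
    by (metis prod.collapse)
  show "(snd x = snd y) = (x = y)"
  proof
    assume "snd x = snd y"
    hence "c = c'" using xy by simp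
    moreover have "a = a'"
      using xy \<open>c = c'\<close> unfolding consec_def by (auto, metis linorder_neqE)
    ultimately show "x = y" using xy by simp
  qed simp
next
  fix x assume "x \<in> consec C"
  then obtain a c where "x = (a, c)" "(a, c) \<in> consec C" by (metis prod.collapse)
  moreover have "Min C \<le> a" using assms \<open>(a, c) \<in> consec C\<close> unfolding consec_def by auto
  ultimately show "snd x \<in> C - {Min C}" unfolding consec_def by auto
next
  fix c assume "c \<in> C - {Min C}"
  hence "Min C < c" using assms Min_le[OF assms] by (metis Diff_iff insertCI order_le_less)
  thus "\<exists>x\<in>consec C. c = snd x" using consec_left[OF assms _ \<open>Min C < c\<close>] \<open>c \<in> C - {Min C}\<close> by force
qed

lemma consec_fst_bij:
  fixes C :: "rat set"
  assumes "finite C"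
  shows "bij_betw fst (consec C) (C - {Max C})"
proof (rule bij_betwI')
  fix x y assume "x \<in> consec C" "y \<in> consec C"
  then obtain a c a' c' where xy: "x = (a, c)" "y = (a', c')" "(a, c) \<in> consec C" "(a', c') \<in> consec C"
    by (metis prod.collapse)
  show "(fst x = fst y) = (x = y)"
  proof
    assume "fst x = fst y"
    hence "a = a'" using xy by simp
    moreover have "c = c'"
      using xy \<open>a = a'\<close> unfolding consec_def by (auto, metis linorder_neqE)
    ultimately show "x = y" using xy by simp
  qed simp
next
  fix x assume "x \<in> consec C"
  then obtain a c where "x = (a, c)" "(a, c) \<in> consec C" by (metis prod.collapse)
  moreover have "c \<le> Max C" using assms \<open>(a, c) \<in> consec C\<close> unfolding consec_def by auto
  ultimately show "fst x \<in> C - {Max C}" unfolding consec_def by auto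
next
  fix a assume "a \<in> C - {Max C}"
  hence "a < Max C" using assms Max_ge[OF assms] by (metis Diff_iff insertCI order_le_less)
  thus "\<exists>x\<in>consec C. a = fst x" using consec_right[OF assms _ \<open>a < Max C\<close>] \<open>a \<in> C - {Max C}\<close> by force
qed

lemma consec_telescope:
  fixes C :: "rat set" and h :: "rat \<Rightarrow> 'a::ab_group_add"
  assumes "finite C" "C \<noteq> {}"
  shows "(\<Sum>(a, c)\<in>consec C. h c - h a) = h (Max C) - h (Min C)"
proof -
  have "(\<Sum>(a, c)\<in>consec C. h c - h a) = (\<Sum>x\<in>consec C. h (snd x)) - (\<Sum>x\<in>consec C. h (fst x))"
    by (simp add: case_prod_beta sum_subtractf)
  also have "(\<Sum>x\<in>consec C. h (snd x)) = (\<Sum>c\<in>C - {Min C}. h c)"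
    using sum.reindex_bij_betw[OF consec_snd_bij[OF assms(1)]] .
  also have "(\<Sum>x\<in>consec C. h (fst x)) = (\<Sum>c\<in>C - {Max C}. h c)"
    using sum.reindex_bij_betw[OF consec_fst_bij[OF assms(1)]] .
  also have "(\<Sum>c\<in>C - {Min C}. h c) = (\<Sum>c\<in>C. h c) - h (Min C)"
    using assms Min_in by (simp add: sum_diff1)
  also have "(\<Sum>c\<in>C - {Max C}. h c) = (\<Sum>c\<in>C. h c) - h (Max C)"
    using assms Max_in by (simp add: sum_diff1)
  finally show ?thesis by simp
qed

lemma consec_sum:
  fixes C :: "rat set" and m p :: "rat \<Rightarrow> 'a::ab_group_add"
  assumes "finite C" "C \<noteq> {}"
  shows "(\<Sum>(a, c)\<in>consec C. m c - p a) = (\<Sum>c\<in>C - {Min C}. m c - p c) + p (Max C) - p (Min C)"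
proof -
  have "(\<Sum>(a, c)\<in>consec C. m c - p a) = (\<Sum>(a, c)\<in>consec C. m c - p c) + (\<Sum>(a, c)\<in>consec C. p c - p a)"
    by (simp add: case_prod_beta sum.distrib[symmetric])
  also have "(\<Sum>(a, c)\<in>consec C. m c - p c) = (\<Sum>c\<in>C - {Min C}. m c - p c)"
    using sum.reindex_bij_betw[OF consec_snd_bij[OF assms(1)], of "\<lambda>c. m c - p c"] by (simp add: case_prod_beta)
  also have "(\<Sum>(a, c)\<in>consec C. p c - p a) = p (Max C) - p (Min C)"
    by (rule consec_telescope[OF assms])
  finally show ?thesis by (simp add: algebra_simps)
qed

lemma consec_cover:
  fixes C :: "rat set"
  assumes "finite C" "Min C < t" "t < Max C" "t \<notin> C" and ne: "C \<noteq> {}"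
  shows "\<exists>a c. (a, c) \<in> consec C \<and> a < t \<and> t < c"
proof -
  define c where "c = Min {y \<in> C. t < y}"
  have ne2: "{y \<in> C. t < y} \<noteq> {}" using assms Max_in[OF assms(1) ne] by force
  have cin: "c \<in> C" "t < c" using Min_in[OF _ ne2] assms(1) unfolding c_def by auto
  have cmin: "\<And>y. y \<in> C \<Longrightarrow> t < y \<Longrightarrow> c \<le> y" unfolding c_def using assms(1) by (intro Min_le) auto
  have "Min C < c" using assms(2) cin by simp
  from consec_left[OF assms(1) cin(1) this] have "(Max {y \<in> C. y < c}, c) \<in> consec C" .
  moreover have "Max {y \<in> C. y < c} < t"
  proof -
    have fin: "finite {y \<in> C. y < c}" using assms(1) by simp
    have ne3: "{y \<in> C. y < c} \<noteq> {}" using assms(2) cin Min_in[OF assms(1) ne] by force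
    have "Max {y \<in> C. y < c} \<in> C" "Max {y \<in> C. y < c} < c" using Max_in[OF fin ne3] by auto
    moreover have "\<not> (t < Max {y \<in> C. y < c})"
    proof
      assume "t < Max {y \<in> C. y < c}"
      hence "c \<le> Max {y \<in> C. y < c}" using cmin \<open>Max {y \<in> C. y < c} \<in> C\<close> by blast
      thus False using \<open>Max {y \<in> C. y < c} < c\<close> by simp
    qed
    moreover have "Max {y \<in> C. y < c} \<noteq> t" using assms(4) \<open>Max {y \<in> C. y < c} \<in> C\<close> by auto
    ultimately show ?thesis by simp
  qed
  ultimately show ?thesis using cin by blast
qed

section \<open>Discrete Laplacian on a connected weighted graph\<close>

definition conn :: "'a set \<Rightarrow> ('a \<Rightarrow> 'a \<Rightarrow> rat) \<Rightarrow> bool" where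
  "conn V w \<longleftrightarrow> (\<forall>S. S \<subseteq> V \<longrightarrow> S \<noteq> {} \<longrightarrow> S \<noteq> V \<longrightarrow> (\<exists>u\<in>S. \<exists>u'\<in>V - S. w u u' > 0))"

lemma kron_conn:
  fixes w :: "'a \<Rightarrow> 'a \<Rightarrow> rat"
  assumes c: "conn (insert v F) w" and vF: "v \<notin> F" and nn: "\<And>u u'. 0 \<le> w u u'" and D: "D > 0"
  shows "conn F (\<lambda>u u'. w u u' + w u v * w v u' / D)"
  unfolding conn_def
proof (intro allI impI)
  fix S assume S: "S \<subseteq> F" "S \<noteq> {}" "S \<noteq> F"
  have ext: "\<And>u u'. w u u' \<le> w u u' + w u v * w v u' / D" using nn D by simp
  show "\<exists>u\<in>S. \<exists>u'\<in>F - S. 0 < w u u' + w u v * w v u' / D"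
  proof (cases "\<exists>u\<in>S. \<exists>u'\<in>F - S. w u u' > 0")
    case True
    then show ?thesis using ext by (meson less_le_trans)
  next
    case False
    have "S \<subseteq> insert v F" "S \<noteq> insert v F" using S vF by auto
    from c[unfolded conn_def, rule_format, OF this(1) S(2) this(2)] obtain u u' where u: "u \<in> S" "u' \<in> insert v F - S" "w u u' > 0" by blast
    have "u' = v"
    proof (rule ccontr)
      assume "u' \<noteq> v"
      hence "u' \<in> F - S" using u by auto
      thus False using False u by blast
    qed
    obtain z where z: "z \<in> F - S" using S by auto
    have "insert v S \<subseteq> insert v F" "insert v S \<noteq> {}" "insert v S \<noteq> insert v F" using S z vF by auto
    from c[unfolded conn_def, rule_format, OF this] obtain y y' where y: "y \<in> insert v S" "y' \<in> insert v F - insert v S" "w y y' > 0" by blast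
    have "y' \<in> F - S" using y by auto
    hence "y = v" using False y by auto
    have "0 < w u v * w v y' / D" using u \<open>u' = v\<close> y \<open>y = v\<close> D by simp
    moreover have "0 \<le> w u y'" using nn by simp
    ultimately have "0 < w u y' + w u v * w v y' / D" by simp
    thus ?thesis using u(1) \<open>y' \<in> F - S\<close> by blast
  qed
qed

lemma kron:
  fixes V :: "'a set"
  assumes "finite V"
  shows "\<And>w r. (\<And>u u'. w u u' = w u' u) \<Longrightarrow> (\<And>u u'. 0 \<le> w u u') \<Longrightarrow> conn V w \<Longrightarrow>
    (\<Sum>v\<in>V. r v) = (0::rat) \<Longrightarrow> \<exists>\<phi>. \<forall>v\<in>V. (\<Sum>u\<in>V. w v u * (\<phi> v - \<phi> u)) = r v"
  using assms
proof (induction V rule: finite_induct)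
  case empty
  then show ?case by simp
next
  case (insert v F w r)
  show ?case
  proof (cases "F = {}")
    case True
    then show ?thesis using insert.prems by simp
  next
    case False
    define D where "D = (\<Sum>u\<in>F. w v u)"
    have "{v} \<subseteq> insert v F" "{v} \<noteq> {}" "{v} \<noteq> insert v F" using False insert.hyps by auto
    then obtain u0 where u0: "u0 \<in> F" "w v u0 > 0" using insert.prems(3) unfolding conn_def by blast
    have "w v u0 \<le> D" unfolding D_def using u0 insert.hyps(1) insert.prems(2) by (intro member_le_sum) auto
    hence Dpos: "D > 0" using u0 by simp
    define w' where "w' = (\<lambda>u u'. w u u' + w u v * w v u' / D)"
    define r' where "r' = (\<lambda>u. r u + w u v * r v / D)"
    have sym': "\<And>u u'. w' u u' = w' u' u" unfolding w'_def using insert.prems(1) by (simp add: mult.commute)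
    have nn': "\<And>u u'. 0 \<le> w' u u'" unfolding w'_def using insert.prems(2) Dpos by simp
    have conn': "conn F w'" unfolding w'_def using kron_conn[OF insert.prems(3) insert.hyps(2) insert.prems(2) Dpos] .
    have "(\<Sum>u\<in>F. r' u) = (\<Sum>u\<in>F. r u) + (\<Sum>u\<in>F. w v u) * r v / D"
      unfolding r'_def by (simp add: sum.distrib sum_divide_distrib[symmetric] sum_distrib_right insert.prems(1))
    also have "\<dots> = (\<Sum>u\<in>F. r u) + r v" unfolding D_def[symmetric] using Dpos by simp
    also have "\<dots> = 0" using insert.prems(4) insert.hyps by (simp add: add.commute)
    finally have sum': "(\<Sum>u\<in>F. r' u) = 0" .
    obtain \<phi>' where phi': "\<forall>y\<in>F. (\<Sum>u\<in>F. w' y u * (\<phi>' y - \<phi>' u)) = r' y"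
      using insert.IH[OF sym' nn' conn' sum'] by blast
    define A where "A = (\<Sum>u\<in>F. w v u * \<phi>' u)"
    define \<phi> where "\<phi> = \<phi>'(v := (r v + A) / D)"
    have phiF: "\<And>u. u \<in> F \<Longrightarrow> \<phi> u = \<phi>' u" unfolding \<phi>_def using insert.hyps by auto
    show ?thesis
    proof (intro exI ballI)
      fix y assume "y \<in> insert v F"
      show "(\<Sum>u\<in>insert v F. w y u * (\<phi> y - \<phi> u)) = r y"
      proof (cases "y = v")
        case True
        have "(\<Sum>u\<in>insert v F. w y u * (\<phi> y - \<phi> u)) = (\<Sum>u\<in>F. w v u * (\<phi> v - \<phi>' u))"
          using True insert.hyps phiF by simp
        also have "\<dots> = D * \<phi> v - A" unfolding D_def A_def
          by (simp add: algebra_simps sum_subtractf sum_distrib_right sum_distrib_left)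
        also have "\<dots> = r v" unfolding \<phi>_def using Dpos by simp
        finally show ?thesis using True by simp
      next
        case False
        hence yF: "y \<in> F" using \<open>y \<in> insert v F\<close> by simp
        have "(\<Sum>u\<in>insert v F. w y u * (\<phi> y - \<phi> u))
            = w y v * (\<phi>' y - \<phi> v) + (\<Sum>u\<in>F. w y u * (\<phi>' y - \<phi>' u))"
          using insert.hyps phiF yF by simp
        also have "(\<Sum>u\<in>F. w y u * (\<phi>' y - \<phi>' u))
             = (\<Sum>u\<in>F. w' y u * (\<phi>' y - \<phi>' u)) - w y v / D * (\<Sum>u\<in>F. w v u * (\<phi>' y - \<phi>' u))"
        proof -
          have "\<And>u. w' y u = w y u + (w y v / D) * w v u" unfolding w'_def by simp
          hence "(\<Sum>u\<in>F. w' y u * (\<phi>' y - \<phi>' u)) = (\<Sum>u\<in>F. w y u * (\<phi>' y - \<phi>' u)) + w y v / D * (\<Sum>u\<in>F. w v u * (\<phi>' y - \<phi>' u))"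
            by (simp add: distrib_right sum.distrib sum_distrib_left mult.assoc)
          thus ?thesis by simp
        qed
        also have "(\<Sum>u\<in>F. w v u * (\<phi>' y - \<phi>' u)) = D * \<phi>' y - A" unfolding D_def A_def
          by (simp add: algebra_simps sum_subtractf sum_distrib_right sum_distrib_left)
        also have "(\<Sum>u\<in>F. w' y u * (\<phi>' y - \<phi>' u)) = r' y" using phi' yF by blast
        also have "\<phi> v = (r v + A) / D" unfolding \<phi>_def by simp
        finally show ?thesis unfolding r'_def using Dpos by (simp add: field_simps)
      qed
    qed
  qed
qed

section \<open>Functions with two ramps\<close>

definition rform :: "rat poly \<Rightarrow> rat \<Rightarrow> rat \<Rightarrow> rat \<Rightarrow> rat \<Rightarrow> rat \<Rightarrow> rat" where
  "rform q k1 t1 k2 t2 s = poly q s + k1 * max 0 (s - t1) + k2 * max 0 (s - t2)"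

definition rpR :: "rat poly \<Rightarrow> rat \<Rightarrow> rat \<Rightarrow> rat \<Rightarrow> rat \<Rightarrow> rat \<Rightarrow> rat poly" where
  "rpR q k1 t1 k2 t2 t = q + (if t1 \<le> t then smult k1 [:-t1, 1:] else 0) + (if t2 \<le> t then smult k2 [:-t2, 1:] else 0)"

definition rpL :: "rat poly \<Rightarrow> rat \<Rightarrow> rat \<Rightarrow> rat \<Rightarrow> rat \<Rightarrow> rat \<Rightarrow> rat poly" where
  "rpL q k1 t1 k2 t2 t = q + (if t1 < t then smult k1 [:-t1, 1:] else 0) + (if t2 < t then smult k2 [:-t2, 1:] else 0)"

lemma rpR_d2: "pderiv (pderiv (rpR q k1 t1 k2 t2 t)) = pderiv (pderiv q)"
  unfolding rpR_def by (simp add: pderiv_add pderiv_smult pderiv_pCons)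

lemma rpL_d2: "pderiv (pderiv (rpL q k1 t1 k2 t2 t)) = pderiv (pderiv q)"
  unfolding rpL_def by (simp add: pderiv_add pderiv_smult pderiv_pCons)

lemma rpR_d1: "poly (pderiv (rpR q k1 t1 k2 t2 t)) x = poly (pderiv q) x + (if t1 \<le> t then k1 else 0) + (if t2 \<le> t then k2 else 0)"
  unfolding rpR_def by (simp add: pderiv_add pderiv_smult pderiv_pCons)

lemma rpL_d1: "poly (pderiv (rpL q k1 t1 k2 t2 t)) x = poly (pderiv q) x + (if t1 < t then k1 else 0) + (if t2 < t then k2 else 0)"
  unfolding rpL_def by (simp add: pderiv_add pderiv_smult pderiv_pCons)

lemma rform_seg:
  assumes "a \<le> s" "s \<le> c" "k1 \<noteq> 0 \<longrightarrow> c \<le> t1 \<or> t1 \<le> a" "k2 \<noteq> 0 \<longrightarrow> c \<le> t2 \<or> t2 \<le> a"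
  shows "rform q k1 t1 k2 t2 s = poly (rpR q k1 t1 k2 t2 a) s"
proof -
  have 1: "k1 * max 0 (s - t1) = (if t1 \<le> a then k1 * (s - t1) else 0)"
    using assms by (cases "k1 = 0") (auto simp: max_def)
  have 2: "k2 * max 0 (s - t2) = (if t2 \<le> a then k2 * (s - t2) else 0)"
    using assms by (cases "k2 = 0") (auto simp: max_def)
  show ?thesis unfolding rform_def rpR_def 1 2 by (simp add: algebra_simps)
qed

lemma rform_right:
  assumes "\<epsilon>0 > 0"
  shows "\<exists>\<epsilon>>0. \<epsilon> \<le> \<epsilon>0 \<and> (\<forall>s. t \<le> s \<and> s \<le> t + \<epsilon> \<longrightarrow> rform q k1 t1 k2 t2 s = poly (rpR q k1 t1 k2 t2 t) s)"
proof -
  define \<epsilon> where "\<epsilon> = min \<epsilon>0 (min (if t1 > t then t1 - t else 1) (if t2 > t then t2 - t else 1))"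
  have "\<epsilon> > 0" unfolding \<epsilon>_def using assms by auto
  moreover have "\<epsilon> \<le> \<epsilon>0" unfolding \<epsilon>_def by simp
  moreover have "rform q k1 t1 k2 t2 s = poly (rpR q k1 t1 k2 t2 t) s" if s: "t \<le> s" "s \<le> t + \<epsilon>" for s
  proof (rule rform_seg[of t s "t + \<epsilon>"])
    show "k1 \<noteq> 0 \<longrightarrow> t + \<epsilon> \<le> t1 \<or> t1 \<le> t" unfolding \<epsilon>_def by auto
    show "k2 \<noteq> 0 \<longrightarrow> t + \<epsilon> \<le> t2 \<or> t2 \<le> t" unfolding \<epsilon>_def by auto
  qed (use s in auto)
  ultimately show ?thesis by blast
qed

lemma rform_left:
  assumes "\<epsilon>0 > 0"
  shows "\<exists>\<epsilon>>0. \<epsilon> \<le> \<epsilon>0 \<and> (\<forall>s. t - \<epsilon> \<le> s \<and> s \<le> t \<longrightarrow> rform q k1 t1 k2 t2 s = poly (rpL q k1 t1 k2 t2 t) s)"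
proof -
  define \<epsilon> where "\<epsilon> = min \<epsilon>0 (min (if t1 < t then t - t1 else 1) (if t2 < t then t - t2 else 1))"
  have "\<epsilon> > 0" unfolding \<epsilon>_def using assms by auto
  moreover have "\<epsilon> \<le> \<epsilon>0" unfolding \<epsilon>_def by simp
  moreover have "rform q k1 t1 k2 t2 s = poly (rpL q k1 t1 k2 t2 t) s" if s: "t - \<epsilon> \<le> s" "s \<le> t" for s
  proof -
    have 1: "k1 * max 0 (s - t1) = (if t1 < t then k1 * (s - t1) else 0)"
      using s unfolding \<epsilon>_def by (auto simp: max_def)
    have 2: "k2 * max 0 (s - t2) = (if t2 < t then k2 * (s - t2) else 0)"
      using s unfolding \<epsilon>_def by (auto simp: max_def)
    show ?thesis unfolding rform_def rpL_def 1 2 by (simp add: algebra_simps)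
  qed
  ultimately show ?thesis by blast
qed

lemma rform_both:
  assumes "\<epsilon>0 > 0" "k1 \<noteq> 0 \<longrightarrow> t1 \<noteq> t" "k2 \<noteq> 0 \<longrightarrow> t2 \<noteq> t"
  shows "\<exists>\<epsilon>>0. \<epsilon> \<le> \<epsilon>0 \<and> (\<forall>s. t - \<epsilon> \<le> s \<and> s \<le> t + \<epsilon> \<longrightarrow> rform q k1 t1 k2 t2 s = poly (rpR q k1 t1 k2 t2 (t - \<epsilon>)) s)"
proof -
  define \<epsilon> where "\<epsilon> = min \<epsilon>0 (min (if t1 \<noteq> t then \<bar>t1 - t\<bar> else 1) (if t2 \<noteq> t then \<bar>t2 - t\<bar> else 1))"
  have "\<epsilon> > 0" unfolding \<epsilon>_def using assms by auto
  moreover have "\<epsilon> \<le> \<epsilon>0" unfolding \<epsilon>_def by simp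
  moreover have "rform q k1 t1 k2 t2 s = poly (rpR q k1 t1 k2 t2 (t - \<epsilon>)) s" if s: "t - \<epsilon> \<le> s" "s \<le> t + \<epsilon>" for s
  proof (rule rform_seg[of "t - \<epsilon>" s "t + \<epsilon>"])
    show "k1 \<noteq> 0 \<longrightarrow> t + \<epsilon> \<le> t1 \<or> t1 \<le> t - \<epsilon>" using assms(2) unfolding \<epsilon>_def by (auto simp: abs_if)
    show "k2 \<noteq> 0 \<longrightarrow> t + \<epsilon> \<le> t2 \<or> t2 \<le> t - \<epsilon>" using assms(3) unfolding \<epsilon>_def by (auto simp: abs_if)
  qed (use s in auto)
  ultimately show ?thesis by blast
qed

locale rmg_loc =
  fixes G :: "('v, 'e) rmg"
  assumes rm: "rm_graph G"
begin

abbreviation "V \<equiv> verts G"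
abbreviation "E \<equiv> edges G"
abbreviation "D \<equiv> hedges G"
abbreviation "L \<equiv> len G"
abbreviation "iv \<equiv> inv G"

lemma finV: "finite V" and finE: "finite E" and finD: "finite D" and disj: "E \<inter> D = {}"
  using rm unfolding rm_graph_def by auto

lemma src_in: "e \<in> E \<union> D \<Longrightarrow> src G e \<in> V"
  using rm unfolding rm_graph_def by auto

lemma inv_in: "e \<in> E \<Longrightarrow> iv e \<in> E" and inv_neq: "e \<in> E \<Longrightarrow> iv e \<noteq> e"
  and inv_inv: "e \<in> E \<Longrightarrow> iv (iv e) = e"
  using rm unfolding rm_graph_def by auto

lemma len_pos: "e \<in> E \<Longrightarrow> L e > 0" and len_inv: "e \<in> E \<Longrightarrow> L (iv e) = L e"
  using rm unfolding rm_graph_def by auto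

lemma edge_notD: "e \<in> E \<Longrightarrow> e \<notin> D" and hedge_notE: "e \<in> D \<Longrightarrow> e \<notin> E"
  using disj by auto

lemma tgt_in: "e \<in> E \<Longrightarrow> tgt G e \<in> V"
  unfolding tgt_def using src_in inv_in by auto

lemma src_inv: "e \<in> E \<Longrightarrow> src G (iv e) = tgt G e"
  unfolding tgt_def by simp

lemma tgt_inv: "e \<in> E \<Longrightarrow> tgt G (iv e) = src G e"
  unfolding tgt_def using inv_inv by simp

lemma inv_bij: "bij_betw iv E E"
  by (rule bij_betw_byWitness[where f' = iv]) (auto simp: inv_in inv_inv)

lemma sum_inv: "(\<Sum>e\<in>E. f (iv e)) = (\<Sum>e\<in>E. f e)"
  using sum.reindex_bij_betw[OF inv_bij] .

lemma path_cross:
  assumes "(a, b) \<in> {(src G e, tgt G e) | e. e \<in> E}\<^sup>*" "a \<in> S" "b \<notin> S"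
  shows "\<exists>e\<in>E. src G e \<in> S \<and> tgt G e \<notin> S"
  using assms
proof (induction rule: rtrancl_induct)
  case base
  then show ?case by simp
next
  case (step y z)
  show ?case
  proof (cases "y \<in> S")
    case True
    then show ?thesis using step by auto
  next
    case False
    then show ?thesis using step by auto
  qed
qed

definition wt :: "'v \<Rightarrow> 'v \<Rightarrow> rat" where
  "wt u u' = (\<Sum>e\<in>{e \<in> E. src G e = u \<and> tgt G e = u'}. 1 / L e)"

lemma wt_sym: "wt u u' = wt u' u"
proof -
  have "bij_betw iv {e \<in> E. src G e = u' \<and> tgt G e = u} {e \<in> E. src G e = u \<and> tgt G e = u'}"
    by (rule bij_betw_byWitness[where f' = iv]) (auto simp: inv_in inv_inv src_inv tgt_inv)
  from sum.reindex_bij_betw[OF this, of "\<lambda>e. 1 / L e"]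
  show ?thesis unfolding wt_def by (simp add: len_inv)
qed

lemma wt_nn: "0 \<le> wt u u'"
  unfolding wt_def using len_pos by (intro sum_nonneg) (simp add: less_imp_le)

lemma wt_conn: "conn V wt"
  unfolding conn_def
proof (intro allI impI)
  fix S assume S: "S \<subseteq> V" "S \<noteq> {}" "S \<noteq> V"
  obtain a b where ab: "a \<in> S" "b \<in> V - S" using S by auto
  have "(a, b) \<in> {(src G e, tgt G e) | e. e \<in> E}\<^sup>*" using rm ab S unfolding rm_graph_def by auto
  then obtain e where e: "e \<in> E" "src G e \<in> S" "tgt G e \<notin> S" using path_cross ab by blast
  have "1 / L e \<le> wt (src G e) (tgt G e)" unfolding wt_def using finE e len_pos
    by (intro member_le_sum) (auto simp: less_imp_le)
  moreover have "0 < 1 / L e" using len_pos e by simp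
  ultimately have "0 < wt (src G e) (tgt G e)" by (rule less_le_trans[rotated])
  thus "\<exists>u\<in>S. \<exists>u'\<in>V - S. 0 < wt u u'" using e tgt_in by blast
qed

lemma graph_solve:
  assumes "(\<Sum>v\<in>V. r v) = 0"
  shows "\<exists>\<phi>. \<forall>v\<in>V. (\<Sum>e\<in>{e \<in> E. src G e = v}. (\<phi> v - \<phi> (tgt G e)) / L e) = r v"
proof -
  obtain \<phi> where phi: "\<forall>v\<in>V. (\<Sum>u\<in>V. wt v u * (\<phi> v - \<phi> u)) = r v"
    using kron[OF finV, of wt r] wt_sym wt_nn wt_conn assms by blast
  have "\<forall>v\<in>V. (\<Sum>e\<in>{e \<in> E. src G e = v}. (\<phi> v - \<phi> (tgt G e)) / L e) = (\<Sum>u\<in>V. wt v u * (\<phi> v - \<phi> u))"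
  proof
    fix v assume "v \<in> V"
    have "(\<Sum>e\<in>{e \<in> E. src G e = v}. (\<phi> v - \<phi> (tgt G e)) / L e)
        = (\<Sum>u\<in>V. \<Sum>e\<in>{x \<in> {e \<in> E. src G e = v}. tgt G x = u}. (\<phi> v - \<phi> (tgt G e)) / L e)"
      using finV finE tgt_in by (intro sum.group[symmetric]) auto
    also have "\<dots> = (\<Sum>u\<in>V. wt v u * (\<phi> v - \<phi> u))"
      unfolding wt_def by (intro sum.cong refl) (auto simp: sum_distrib_right intro!: sum.cong)
    finally show "(\<Sum>e\<in>{e \<in> E. src G e = v}. (\<phi> v - \<phi> (tgt G e)) / L e) = (\<Sum>u\<in>V. wt v u * (\<phi> v - \<phi> u))" .
  qed
  thus ?thesis using phi by auto
qed


definition is_pot :: "('v, 'e) meas \<Rightarrow> (('v, 'e) pt \<Rightarrow> rat) \<Rightarrow> ('e \<Rightarrow> rat poly) \<Rightarrow> bool" where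
  "is_pot \<mu> g GP \<longleftrightarrow>
    (\<forall>e\<in>E. \<forall>s. 0 \<le> s \<and> s \<le> L e \<longrightarrow> g (Ep e s) = poly (GP e) s) \<and>
    (\<forall>d\<in>D. \<forall>s. 0 \<le> s \<longrightarrow> g (Ep d s) = poly (GP d) s) \<and>
    (\<forall>e\<in>E \<union> D. poly (GP e) 0 = g (Vx (src G e))) \<and>
    (\<forall>e\<in>E. GP (iv e) = pcompose (GP e) [:L e, -1:]) \<and>
    (\<forall>e\<in>E. - pderiv (pderiv (GP e)) = dens \<mu> e) \<and>
    (\<forall>d\<in>D. pderiv (pderiv (GP d)) = 0 \<and> poly (pderiv (GP d)) 0 = hm \<mu> d) \<and>
    (\<forall>v\<in>V. vm \<mu> v = - (\<Sum>e\<in>{e \<in> E \<union> D. src G e = v}. poly (pderiv (GP e)) 0))"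

lemma poly_antider_0: "poly (antider p) 0 = 0"
  unfolding antider_def by (simp add: poly_sum poly_monom)

lemma sum_src_split:
  "(\<Sum>e\<in>{e \<in> E \<union> D. src G e = v}. f e) = (\<Sum>e\<in>{e \<in> E. src G e = v}. f e) + (\<Sum>e\<in>{e \<in> D. src G e = v}. f e)"
proof -
  have "{e \<in> E \<union> D. src G e = v} = {e \<in> E. src G e = v} \<union> {e \<in> D. src G e = v}" by auto
  thus ?thesis using finE finD disj by (simp add: sum.union_disjoint disjoint_iff)
qed

lemma sum_group_src:
  assumes "S \<subseteq> E \<union> D"
  shows "(\<Sum>v\<in>V. \<Sum>e\<in>{e \<in> S. src G e = v}. f e) = (\<Sum>e\<in>S. f e)"
  using assms finE finD finV src_in by (intro sum.group) (auto intro: finite_subset)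

lemma pot_exists:
  assumes meas: "is_meas G \<mu>" and tm: "total_mass G \<mu> = 0"
  shows "\<exists>g GP. is_pot \<mu> g GP"
proof -
  define Q where "Q e = - antider (antider (dens \<mu> e))" for e
  define q where "q e = Q e - smult (poly (Q e) (L e) / L e) [:0, 1:]" for e
  have q2: "pderiv (pderiv (q e)) = - dens \<mu> e" for e
    unfolding q_def Q_def by (simp add: pderiv_diff pderiv_minus pderiv_antider pderiv_smult pderiv_pCons)
  have q0: "poly (q e) 0 = 0" for e
    unfolding q_def Q_def by (simp add: poly_antider_0)
  have qL: "e \<in> E \<Longrightarrow> poly (q e) (L e) = 0" for e
    unfolding q_def using len_pos[of e] by simp
  have qsym: "q (iv e) = pcompose (q e) [:L e, -1:]" if e: "e \<in> E" for e
  proof -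
    define r where "r = q (iv e) - pcompose (q e) [:L e, -1:]"
    have "pderiv (pderiv r) = 0"
      unfolding r_def using meas e
      by (simp add: pderiv_diff pderiv_add pderiv_reflect pderiv_minus q2 pcompose_uminus is_meas_def)
    hence lin: "poly r x = poly r 0 + poly (pderiv r) 0 * x" for x by (rule pderiv2_zero_linear)
    have r0: "poly r 0 = 0" unfolding r_def using q0 qL e by simp
    have "poly r (L e) = 0" unfolding r_def using q0 qL[of "iv e"] e inv_in len_inv by simp
    hence "poly (pderiv r) 0 * L e = 0" using lin[of "L e"] r0 by simp
    hence "poly (pderiv r) 0 = 0" using len_pos[OF e] by simp
    hence "poly r = poly 0" using lin r0 by (simp add: fun_eq_iff)
    hence "r = 0" using poly_eq_poly_eq_iff by blast
    thus ?thesis unfolding r_def by simp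
  qed
  have dq: "e \<in> E \<Longrightarrow> poly (pderiv (q (iv e))) 0 = - poly (pderiv (q e)) (L e)" for e
    by (simp add: qsym pderiv_reflect)
  have pint: "polyint (dens \<mu> e) 0 (L e) = poly (pderiv (q e)) 0 - poly (pderiv (q e)) (L e)" for e
  proof -
    have "pderiv (- pderiv (q e)) = dens \<mu> e" using q2 by (simp add: pderiv_minus)
    from polyint_ftc[OF this] show ?thesis by simp
  qed
  have sumq: "(\<Sum>e\<in>E. polyint (dens \<mu> e) 0 (L e)) / 2 = (\<Sum>e\<in>E. poly (pderiv (q e)) 0)"
  proof -
    have "(\<Sum>e\<in>E. poly (pderiv (q e)) 0) = (\<Sum>e\<in>E. poly (pderiv (q (iv e))) 0)"
      using sum_inv[of "\<lambda>e. poly (pderiv (q e)) 0"] by simp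
    also have "\<dots> = - (\<Sum>e\<in>E. poly (pderiv (q e)) (L e))"
      using dq by (simp add: sum_negf)
    finally have "(\<Sum>e\<in>E. poly (pderiv (q e)) 0) = - (\<Sum>e\<in>E. poly (pderiv (q e)) (L e))" .
    thus ?thesis by (simp add: pint sum_subtractf)
  qed
  define r where "r v = vm \<mu> v + (\<Sum>e\<in>{e \<in> D. src G e = v}. hm \<mu> e) + (\<Sum>e\<in>{e \<in> E. src G e = v}. poly (pderiv (q e)) 0)" for v
  have "(\<Sum>v\<in>V. r v) = (\<Sum>v\<in>V. vm \<mu> v) + (\<Sum>e\<in>D. hm \<mu> e) + (\<Sum>e\<in>E. poly (pderiv (q e)) 0)"
    unfolding r_def by (simp add: sum.distrib sum_group_src)
  also have "\<dots> = total_mass G \<mu>" unfolding total_mass_def sumq by simp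
  finally have "(\<Sum>v\<in>V. r v) = 0" using tm by simp
  then obtain \<phi> where phi: "\<forall>v\<in>V. (\<Sum>e\<in>{e \<in> E. src G e = v}. (\<phi> v - \<phi> (tgt G e)) / L e) = r v"
    using graph_solve by blast
  define GP where "GP e = (if e \<in> E then q e + [:\<phi> (src G e), (\<phi> (tgt G e) - \<phi> (src G e)) / L e:]
      else [:\<phi> (src G e), hm \<mu> e:])" for e
  define g where "g x = (case x of Vx v \<Rightarrow> \<phi> v | Ep e s \<Rightarrow> poly (GP e) s)" for x
  have c4: "GP (iv e) = pcompose (GP e) [:L e, -1:]" if e: "e \<in> E" for e
  proof -
    have "poly (GP (iv e)) x = poly (pcompose (GP e) [:L e, -1:]) x" for x
    proof -
      have "poly (q (iv e)) x = poly (q e) (L e - x)" using qsym[OF e] by simp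
      moreover have "\<phi> (src G e) + (\<phi> (tgt G e) - \<phi> (src G e)) / L e * (L e - x)
        = \<phi> (tgt G e) + (\<phi> (src G e) - \<phi> (tgt G e)) / L e * x"
        using len_pos[OF e] by (simp add: field_simps)
      ultimately show ?thesis unfolding GP_def using e inv_in[OF e] len_inv[OF e] src_inv[OF e] tgt_inv[OF e]
        by (simp add: algebra_simps)
    qed
    thus ?thesis using poly_eq_poly_eq_iff by blast
  qed
  have c5: "- pderiv (pderiv (GP e)) = dens \<mu> e" if e: "e \<in> E" for e
    unfolding GP_def using e q2 by (simp add: pderiv_add pderiv_pCons)
  have c6: "pderiv (pderiv (GP d)) = 0 \<and> poly (pderiv (GP d)) 0 = hm \<mu> d" if d: "d \<in> D" for d
    unfolding GP_def using d hedge_notE by (simp add: pderiv_pCons)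
  have c3: "poly (GP e) 0 = g (Vx (src G e))" for e
    unfolding GP_def g_def using q0 by simp
  have c7: "vm \<mu> v = - (\<Sum>e\<in>{e \<in> E \<union> D. src G e = v}. poly (pderiv (GP e)) 0)" if v: "v \<in> V" for v
  proof -
    have "(\<Sum>e\<in>{e \<in> E \<union> D. src G e = v}. poly (pderiv (GP e)) 0)
      = (\<Sum>e\<in>{e \<in> E. src G e = v}. poly (pderiv (q e)) 0 - (\<phi> v - \<phi> (tgt G e)) / L e)
        + (\<Sum>e\<in>{e \<in> D. src G e = v}. hm \<mu> e)"
      unfolding sum_src_split GP_def using disj
      by (intro arg_cong2[where f = "(+)"] sum.cong refl) (auto simp: pderiv_add pderiv_pCons diff_divide_distrib)
    also have "\<dots> = - vm \<mu> v" using phi v unfolding r_def by (simp add: sum_subtractf)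
    finally show ?thesis by simp
  qed
  have "is_pot \<mu> g GP"
    unfolding is_pot_def using c3 c4 c5 c6 c7 by (auto simp: g_def)
  thus ?thesis by blast
qed


lemma cpt_cases:
  assumes "valid_pt G x"
  obtains (V) v where "v \<in> V" "cpt G x = Vx v"
  | (E) e t where "e \<in> E" "0 < t" "t < L e" "cpt G x = Ep e t"
  | (D) d t where "d \<in> D" "0 < t" "cpt G x = Ep d t"
proof (cases x)
  case (Vx v)
  then show ?thesis using assms that(1) by simp
next
  case (Ep e t)
  show ?thesis
  proof (cases "t = 0")
    case True
    then show ?thesis using assms Ep that(1) src_in by auto
  next
    case t0: False
    show ?thesis
    proof (cases "e \<in> E \<and> t = L e")
      case True
      then show ?thesis using assms Ep that(1) tgt_in t0 by auto
    next
      case False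
      then show ?thesis using assms Ep that(2,3) t0 hedge_notE by (auto simp: order_le_less)
    qed
  qed
qed

lemma cpt_Ep_E: "e \<in> E \<Longrightarrow> 0 < c \<Longrightarrow> c < L e \<Longrightarrow> cpt G (Ep e c) = Ep e c"
  by simp

lemma cpt_Ep_D: "d \<in> D \<Longrightarrow> 0 < c \<Longrightarrow> cpt G (Ep d c) = Ep d c"
  using hedge_notE by simp

lemma same_pt_sym: "same_pt G p q \<longleftrightarrow> same_pt G q p"
proof -
  have *: "same_pt G q p" if "same_pt G p q" for p q
  proof -
    from that consider "cpt G p = cpt G q" | e t where "e \<in> E" "0 < t" "t < L e" "cpt G p = Ep e t"
      "cpt G q = Ep (iv e) (L e - t)" unfolding same_pt_def by blast
    then show ?thesis
    proof cases
      case 1 then show ?thesis unfolding same_pt_def by simp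
    next
      case (2 e t)
      have "iv e \<in> E" "0 < L (iv e) - (L e - t)" "L e - t < L (iv e)" "cpt G q = Ep (iv e) (L e - t)"
        "cpt G p = Ep (iv (iv e)) (L (iv e) - (L e - t))"
        using 2 inv_in len_inv inv_inv by auto
      then show ?thesis unfolding same_pt_def using 2 by force
    qed
  qed
  show ?thesis using *[of p q] *[of q p] by blast
qed

lemma same_Vx: "same_pt G x (Vx v) \<longleftrightarrow> cpt G x = Vx v"
  unfolding same_pt_def by auto

lemma same_E:
  assumes "e \<in> E" "0 < c" "c < L e"
  shows "same_pt G x (Ep e c) \<longleftrightarrow> cpt G x = Ep e c \<or> cpt G x = Ep (iv e) (L e - c)"
proof
  assume "same_pt G x (Ep e c)"
  hence "same_pt G (Ep e c) x" using same_pt_sym by blast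
  thus "cpt G x = Ep e c \<or> cpt G x = Ep (iv e) (L e - c)" unfolding same_pt_def using assms by auto
next
  assume "cpt G x = Ep e c \<or> cpt G x = Ep (iv e) (L e - c)"
  hence "same_pt G (Ep e c) x" unfolding same_pt_def using assms by auto
  thus "same_pt G x (Ep e c)" using same_pt_sym by blast
qed

lemma same_D:
  assumes "d \<in> D" "0 < c"
  shows "same_pt G x (Ep d c) \<longleftrightarrow> cpt G x = Ep d c"
proof
  assume "same_pt G x (Ep d c)"
  hence "same_pt G (Ep d c) x" using same_pt_sym by blast
  thus "cpt G x = Ep d c" unfolding same_pt_def using assms hedge_notE by auto
next
  assume "cpt G x = Ep d c"
  hence "same_pt G (Ep d c) x" unfolding same_pt_def using assms hedge_notE by auto
  thus "same_pt G x (Ep d c)" using same_pt_sym by blast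
qed

lemma cuts_E: "e \<in> E \<Longrightarrow> cuts G P e = {c. 0 < c \<and> c < L e \<and> (\<exists>p\<in>P. cpt G p = Ep e c \<or> cpt G p = Ep (iv e) (L e - c))}"
  unfolding cuts_def using same_E same_pt_sym by auto

lemma cuts_D: "d \<in> D \<Longrightarrow> cuts G P d = {c. 0 < c \<and> (\<exists>p\<in>P. cpt G p = Ep d c)}"
  unfolding cuts_def using same_D same_pt_sym hedge_notE by auto

lemma finite_cuts:
  assumes "finite P" "e \<in> E \<union> D"
  shows "finite (cuts G P e)"
proof -
  have "cuts G P e \<subseteq> (\<Union>p\<in>P. {c. cpt G p = Ep e c} \<union> {c. cpt G p = Ep (iv e) (L e - c)})"
    using assms(2) by (auto simp: cuts_E cuts_D)
  moreover have "finite {c. cpt G p = Ep e c}" for p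
    by (rule finite_subset[of _ "{THE c. cpt G p = Ep e c}"]) auto
  moreover have "finite {c. cpt G p = Ep (iv e) (L e - c)}" for p
    by (rule finite_subset[of _ "{L e - (THE c. cpt G p = Ep (iv e) c)}"]) auto
  ultimately show ?thesis using assms(1) by (meson finite_UN_I finite_Un finite_subset)
qed

lemma cuts_range_E: "e \<in> E \<Longrightarrow> c \<in> cuts G P e \<Longrightarrow> 0 < c \<and> c < L e"
  unfolding cuts_def by auto

lemma cuts_range: "c \<in> cuts G P e \<Longrightarrow> 0 < c"
  unfolding cuts_def by auto

lemma ecuts_facts:
  assumes "finite P" "e \<in> E"
  shows "finite (ecuts G P e)" "ecuts G P e \<noteq> {}" "Min (ecuts G P e) = 0" "Max (ecuts G P e) = L e"
    "ecuts G P e - {0} = insert (L e) (cuts G P e)" "L e \<notin> cuts G P e"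
proof -
  show f: "finite (ecuts G P e)" unfolding ecuts_def using finite_cuts[OF assms(1)] assms(2) by simp
  show "ecuts G P e \<noteq> {}" unfolding ecuts_def by simp
  have r: "\<And>c. c \<in> ecuts G P e \<Longrightarrow> 0 \<le> c \<and> c \<le> L e"
    unfolding ecuts_def using cuts_range_E[OF assms(2)] len_pos[OF assms(2)] by force
  show "Min (ecuts G P e) = 0" using f r by (intro Min_eqI) (auto simp: ecuts_def)
  show "Max (ecuts G P e) = L e" using f r by (intro Max_eqI) (auto simp: ecuts_def)
  show "L e \<notin> cuts G P e" using cuts_range_E[OF assms(2)] by blast
  show "ecuts G P e - {0} = insert (L e) (cuts G P e)"
    unfolding ecuts_def using cuts_range_E[OF assms(2)] len_pos[OF assms(2)] by force
qed

lemma hcuts_facts: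
  assumes "finite P" "d \<in> D"
  shows "finite ({0} \<union> cuts G P d)" "Min ({0} \<union> cuts G P d) = 0" "Max ({0} \<union> cuts G P d) = tailst G P d"
    "({0} \<union> cuts G P d) - {0} = cuts G P d" "0 \<le> tailst G P d"
proof -
  show f: "finite ({0} \<union> cuts G P d)" using finite_cuts[OF assms(1)] assms(2) by simp
  show "Min ({0} \<union> cuts G P d) = 0" using f cuts_range[of _ P d] by (intro Min_eqI) (auto simp: less_imp_le)
  show "Max ({0} \<union> cuts G P d) = tailst G P d" unfolding tailst_def by simp
  show "({0} \<union> cuts G P d) - {0} = cuts G P d" using cuts_range[of _ P d] by force
  show "0 \<le> tailst G P d" unfolding tailst_def using f by (intro Max_ge) auto
qed

lemma pot_cpt:
  assumes pot: "is_pot \<mu> g GP" and x: "valid_pt G x"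
  shows "g x = g (cpt G x)"
proof (cases x)
  case (Vx v) then show ?thesis by simp
next
  case (Ep e t)
  have eED: "e \<in> E \<union> D" "0 \<le> t" using x Ep by auto
  show ?thesis
  proof (cases "t = 0")
    case True
    have "g (Ep e 0) = poly (GP e) 0" using pot eED unfolding is_pot_def using len_pos by (auto simp: less_imp_le)
    then show ?thesis using pot eED True Ep unfolding is_pot_def by simp
  next
    case t0: False
    show ?thesis
    proof (cases "e \<in> E \<and> t = L e")
      case True
      hence "g (Ep e t) = poly (GP e) (L e)" using pot len_pos unfolding is_pot_def by (auto simp: less_imp_le)
      also have "\<dots> = poly (GP (iv e)) 0" using pot True unfolding is_pot_def by simp
      also have "\<dots> = g (Vx (src G (iv e)))" using pot True inv_in unfolding is_pot_def by blast
      also have "\<dots> = g (Vx (tgt G e))" using True src_inv by simp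
      finally have "g (Ep e t) = g (Vx (tgt G e))" .
      moreover have "cpt G x = Vx (tgt G e)" using Ep t0 True by simp
      ultimately show ?thesis using Ep by simp
    next
      case False
      hence "cpt G x = x" using Ep t0 by auto
      then show ?thesis by simp
    qed
  qed
qed

lemma point_sum:
  assumes pot: "is_pot \<mu> g GP" and x: "valid_pt G x" and xP: "x \<in> P" and P: "finite P"
  shows "(\<Sum>e\<in>E. \<Sum>c\<in>cuts G P e. dlt G x (Ep e c) * g (Ep e c)) / 2
       + (\<Sum>d\<in>D. \<Sum>c\<in>cuts G P d. dlt G x (Ep d c) * g (Ep d c))
       + (\<Sum>v\<in>V. dlt G x (Vx v) * g (Vx v)) = g x"
proof -
  have gx: "g x = g (cpt G x)" by (rule pot_cpt[OF pot x])
  have dE: "\<And>e c. e \<in> E \<Longrightarrow> c \<in> cuts G P e \<Longrightarrow> dlt G x (Ep e c) = (if cpt G x = Ep e c \<or> cpt G x = Ep (iv e) (L e - c) then 1 else 0)"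
    unfolding dlt_def using same_E cuts_range_E by auto
  have dD: "\<And>d c. d \<in> D \<Longrightarrow> c \<in> cuts G P d \<Longrightarrow> dlt G x (Ep d c) = (if cpt G x = Ep d c then 1 else 0)"
    unfolding dlt_def using same_D cuts_range by auto
  have dV: "\<And>v. dlt G x (Vx v) = (if cpt G x = Vx v then 1 else 0)"
    unfolding dlt_def using same_Vx by auto
  from x show ?thesis
  proof (cases rule: cpt_cases)
    case (V v0)
    have "(\<Sum>e\<in>E. \<Sum>c\<in>cuts G P e. dlt G x (Ep e c) * g (Ep e c)) = 0"
      using V by (intro sum.neutral ballI) (simp add: dE)
    moreover have "(\<Sum>d\<in>D. \<Sum>c\<in>cuts G P d. dlt G x (Ep d c) * g (Ep d c)) = 0"
      using V by (intro sum.neutral ballI) (simp add: dD)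
    moreover have "(\<Sum>v\<in>V. dlt G x (Vx v) * g (Vx v)) = g (Vx v0)"
    proof -
      have "(\<Sum>v\<in>V. dlt G x (Vx v) * g (Vx v)) = (\<Sum>v\<in>V. if v = v0 then g (Vx v) else 0)"
        using V by (intro sum.cong refl) (auto simp: dV)
      also have "\<dots> = g (Vx v0)" using V finV by simp
      finally show ?thesis .
    qed
    ultimately show ?thesis using gx V by simp
  next
    case (E e0 t0)
    have e0D: "e0 \<notin> D" using E hedge_notE edge_notD by blast
    have "(\<Sum>d\<in>D. \<Sum>c\<in>cuts G P d. dlt G x (Ep d c) * g (Ep d c)) = 0"
      using E e0D by (intro sum.neutral ballI) (auto simp: dD)
    moreover have "(\<Sum>v\<in>V. dlt G x (Vx v) * g (Vx v)) = 0"
      using E by (intro sum.neutral ballI) (simp add: dV)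
    moreover have "(\<Sum>e\<in>E. \<Sum>c\<in>cuts G P e. dlt G x (Ep e c) * g (Ep e c)) = 2 * g (Ep e0 t0)"
    proof -
      have t0c: "t0 \<in> cuts G P e0" using E xP by (auto simp: cuts_E)
      have t1c: "L e0 - t0 \<in> cuts G P (iv e0)" using E xP inv_in len_inv inv_inv by (auto simp: cuts_E)
      have ne: "iv e0 \<noteq> e0" using inv_neq E by simp
      have inner: "(\<Sum>c\<in>cuts G P e. dlt G x (Ep e c) * g (Ep e c))
          = (if e = e0 then g (Ep e0 t0) else 0) + (if e = iv e0 then g (Ep e0 t0) else 0)" if e: "e \<in> E" for e
      proof -
        have fin: "finite (cuts G P e)" using finite_cuts[OF P] e by simp
        show ?thesis
        proof (cases "e = e0")
          case True
          have "(\<Sum>c\<in>cuts G P e. dlt G x (Ep e c) * g (Ep e c)) = (\<Sum>c\<in>cuts G P e. if c = t0 then g (Ep e0 t0) else 0)"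
            using True E ne by (intro sum.cong refl) (auto simp: dE)
          also have "\<dots> = g (Ep e0 t0)" using fin t0c True by simp
          finally show ?thesis using True ne by simp
        next
          case False
          show ?thesis
          proof (cases "e = iv e0")
            case True
            have "g (Ep (iv e0) (L e0 - t0)) = g (Ep e0 t0)"
              using pot E inv_in len_inv unfolding is_pot_def by (auto simp: less_imp_le)
            have "(\<Sum>c\<in>cuts G P e. dlt G x (Ep e c) * g (Ep e c)) = (\<Sum>c\<in>cuts G P e. if c = L e0 - t0 then g (Ep e0 t0) else 0)"
              using True E e ne inv_inv len_inv \<open>g (Ep (iv e0) (L e0 - t0)) = g (Ep e0 t0)\<close>
              by (intro sum.cong refl) (auto simp: dE)
            also have "\<dots> = g (Ep e0 t0)" using fin t1c True by simp
            finally show ?thesis using True ne by simp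
          next
            case False2: False
            have "(\<Sum>c\<in>cuts G P e. dlt G x (Ep e c) * g (Ep e c)) = 0"
              using False False2 E e inv_inv by (intro sum.neutral ballI) (auto simp: dE)
            then show ?thesis using False False2 by simp
          qed
        qed
      qed
      have "(\<Sum>e\<in>E. \<Sum>c\<in>cuts G P e. dlt G x (Ep e c) * g (Ep e c))
          = (\<Sum>e\<in>E. (if e = e0 then g (Ep e0 t0) else 0) + (if e = iv e0 then g (Ep e0 t0) else 0))"
        using inner by (rule sum.cong[OF refl])
      also have "\<dots> = 2 * g (Ep e0 t0)" using finE E inv_in by (simp add: sum.distrib)
      finally show ?thesis .
    qed
    ultimately show ?thesis using gx E by simp
  next
    case (D d0 t0)
    have d0E: "d0 \<notin> E" using D hedge_notE by blast
    have "(\<Sum>e\<in>E. \<Sum>c\<in>cuts G P e. dlt G x (Ep e c) * g (Ep e c)) = 0"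
      using D d0E inv_in by (intro sum.neutral ballI) (auto simp: dE)
    moreover have "(\<Sum>v\<in>V. dlt G x (Vx v) * g (Vx v)) = 0"
      using D by (intro sum.neutral ballI) (simp add: dV)
    moreover have "(\<Sum>d\<in>D. \<Sum>c\<in>cuts G P d. dlt G x (Ep d c) * g (Ep d c)) = g (Ep d0 t0)"
    proof -
      have t0c: "t0 \<in> cuts G P d0" using D xP by (auto simp: cuts_D)
      have inner: "(\<Sum>c\<in>cuts G P d. dlt G x (Ep d c) * g (Ep d c)) = (if d = d0 then g (Ep d0 t0) else 0)"
        if d: "d \<in> D" for d
      proof -
        have fin: "finite (cuts G P d)" using finite_cuts[OF P] d by simp
        have "(\<Sum>c\<in>cuts G P d. dlt G x (Ep d c) * g (Ep d c)) = (\<Sum>c\<in>cuts G P d. if d = d0 \<and> c = t0 then g (Ep d0 t0) else 0)"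
          using D d by (intro sum.cong refl) (auto simp: dD)
        also have "\<dots> = (if d = d0 then g (Ep d0 t0) else 0)" using fin t0c by (cases "d = d0") auto
        finally show ?thesis .
      qed
      have "(\<Sum>d\<in>D. \<Sum>c\<in>cuts G P d. dlt G x (Ep d c) * g (Ep d c)) = (\<Sum>d\<in>D. if d = d0 then g (Ep d0 t0) else 0)"
        using inner by (rule sum.cong[OF refl])
      also have "\<dots> = g (Ep d0 t0)" using finD D by simp
      finally show ?thesis .
    qed
    ultimately show ?thesis using gx D by simp
  qed
qed


section \<open>Green identity\<close>

lemma seg_linear:
  assumes "a < c" and F: "\<And>s. a \<le> s \<Longrightarrow> s \<le> c \<Longrightarrow> F (Ep e s) = poly p s"
    and dd0: "\<And>t. a < t \<Longrightarrow> t < c \<Longrightarrow> dd F e t = 0"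
  shows "pderiv (pderiv p) = 0"
proof -
  have "poly (pderiv (pderiv p)) t = poly 0 t" if "a + (c - a) / 3 \<le> t" "t \<le> c - (c - a) / 3" for t
  proof -
    have t: "a < t" "t < c" using that assms(1) by (auto simp: field_simps)
    have "dd F e t = poly (pderiv (pderiv p)) t"
      by (rule dd_eq[of "min (t - a) (c - t)"]) (use t F in auto)
    thus ?thesis using dd0 t by simp
  qed
  thus ?thesis using assms(1) by (intro poly_eq_on_interval[of "a + (c - a) / 3" "c - (c - a) / 3"]) (auto simp: field_simps)
qed

definition psp :: "(('v, 'e) pt \<Rightarrow> rat) \<Rightarrow> ('e \<Rightarrow> rat poly) \<Rightarrow> (('v, 'e) pt \<Rightarrow> rat) \<Rightarrow> 'e \<Rightarrow> rat \<Rightarrow> rat" where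
  "psp F GP g e t = dplus F e t * g (Ep e t) - F (Ep e t) * poly (pderiv (GP e)) t"

definition psm :: "(('v, 'e) pt \<Rightarrow> rat) \<Rightarrow> ('e \<Rightarrow> rat poly) \<Rightarrow> (('v, 'e) pt \<Rightarrow> rat) \<Rightarrow> 'e \<Rightarrow> rat \<Rightarrow> rat" where
  "psm F GP g e t = dminus F e t * g (Ep e t) - F (Ep e t) * poly (pderiv (GP e)) t"

definition dd_cond :: "('v, 'e) pt set \<Rightarrow> (('v, 'e) pt \<Rightarrow> rat) \<Rightarrow> bool" where
  "dd_cond P F \<longleftrightarrow> (\<forall>e \<in> E \<union> D. \<forall>t. 0 < t \<and> (e \<in> E \<longrightarrow> t < L e) \<and> t \<notin> cuts G P e \<longrightarrow> dd F e t = 0)"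

lemma seg_data:
  assumes om: "omega_logP G P F" and ddc: "dd_cond P F" and P: "finite P"
    and e: "e \<in> E \<union> D" and ac: "(a, c) \<in> consec (if e \<in> E then ecuts G P e else {0} \<union> cuts G P e)"
  obtains p where "a < c" "0 \<le> a" "e \<in> E \<Longrightarrow> c \<le> L e" "\<And>s. a \<le> s \<Longrightarrow> s \<le> c \<Longrightarrow> F (Ep e s) = poly p s"
    "pderiv (pderiv p) = 0" "piece F e a c = p" "dplus F e a = poly (pderiv p) a" "dminus F e c = poly (pderiv p) c"
    "poly (pderiv p) c = poly (pderiv p) a"
proof -
  define C where "C = (if e \<in> E then ecuts G P e else {0} \<union> cuts G P e)"
  have acC: "(a, c) \<in> consec C" using ac unfolding C_def .
  have rng: "0 \<le> y \<and> (e \<in> E \<longrightarrow> y \<le> L e)" if y: "y \<in> C" for y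
  proof (cases "e \<in> E")
    case True
    then have "y \<in> {0, L e} \<union> cuts G P e" using y unfolding C_def ecuts_def by simp
    thus ?thesis using cuts_range_E[OF True, of y P] len_pos[OF True] True by auto
  next
    case False
    then have "y \<in> {0} \<union> cuts G P e" using y unfolding C_def by simp
    thus ?thesis using cuts_range[of y P e] False by auto
  qed
  have cutsC: "cuts G P e \<subseteq> C" unfolding C_def ecuts_def by auto
  have aC: "a \<in> C" "c \<in> C" "a < c" using acC unfolding consec_def by auto
  obtain p where p: "\<And>s. a \<le> s \<Longrightarrow> s \<le> c \<Longrightarrow> F (Ep e s) = poly p s"
  proof -
    have "\<exists>p. \<forall>s. a \<le> s \<and> s \<le> c \<longrightarrow> F (Ep e s) = poly p s"
      using om e acC unfolding omega_logP_def C_def by (cases "e \<in> E") auto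
    thus ?thesis using that by blast
  qed
  have lin: "pderiv (pderiv p) = 0"
  proof (rule seg_linear[OF aC(3) p])
    fix t assume t: "a < t" "t < c"
    have "t \<notin> C" using acC t unfolding consec_def by auto
    hence "t \<notin> cuts G P e" using cutsC by auto
    moreover have "0 < t" "e \<in> E \<longrightarrow> t < L e" using rng[OF aC(1)] rng[OF aC(2)] t by auto
    ultimately show "dd F e t = 0" using ddc e unfolding dd_cond_def by blast
  qed
  have pc: "piece F e a c = p" by (rule piece_eq[OF aC(3) p])
  have dp: "dplus F e a = poly (pderiv p) a" by (rule dplus_eq[of "c - a"]) (use aC p in auto)
  have dm: "dminus F e c = poly (pderiv p) c" by (rule dminus_eq[of "c - a"]) (use aC p in auto)
  have cst: "poly (pderiv p) c = poly (pderiv p) a"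
    by (rule pderiv_zero_const[OF lin])
  show ?thesis using that[OF aC(3) _ _ p lin pc dp dm cst] rng aC by auto
qed

lemma edge_green:
  assumes pot: "is_pot \<mu> g GP" and om: "omega_logP G P F" and ddc: "dd_cond P F" and P: "finite P" and e: "e \<in> E"
  shows "(\<Sum>(a, c)\<in>consec (ecuts G P e). polyint (piece F e a c * dens \<mu> e) a c)
    = (\<Sum>c\<in>cuts G P e. (dminus F e c - dplus F e c) * g (Ep e c)) + psm F GP g e (L e) - psp F GP g e 0"
proof -
  note ef = ecuts_facts[OF P e]
  have seg: "polyint (piece F e a c * dens \<mu> e) a c = psm F GP g e c - psp F GP g e a"
    if ac: "(a, c) \<in> consec (ecuts G P e)" for a c
  proof -
    from ac e have ac': "(a, c) \<in> consec (if e \<in> E then ecuts G P e else {0} \<union> cuts G P e)" by simp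
    have eED: "e \<in> E \<union> D" using e by simp
    obtain p where p0: "a < c" "0 \<le> a" "e \<in> E \<Longrightarrow> c \<le> L e" "\<And>s. a \<le> s \<Longrightarrow> s \<le> c \<Longrightarrow> F (Ep e s) = poly p s"
      "pderiv (pderiv p) = 0" "piece F e a c = p" "dplus F e a = poly (pderiv p) a" "dminus F e c = poly (pderiv p) c"
      "poly (pderiv p) c = poly (pderiv p) a"
      by (rule seg_data[OF om ddc P eED ac']) blast
    have p: "a < c" "0 \<le> a" "c \<le> L e" "\<And>s. a \<le> s \<Longrightarrow> s \<le> c \<Longrightarrow> F (Ep e s) = poly p s"
      "pderiv (pderiv p) = 0" "piece F e a c = p" "dplus F e a = poly (pderiv p) a" "dminus F e c = poly (pderiv p) c"
      "poly (pderiv p) c = poly (pderiv p) a" using p0 e by auto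
    have gs: "g (Ep e s) = poly (GP e) s" if "0 \<le> s" "s \<le> L e" for s using pot e that unfolding is_pot_def by blast
    have "polyint (piece F e a c * dens \<mu> e) a c = polyint (p * - pderiv (pderiv (GP e))) a c"
      using pot e p(6) unfolding is_pot_def by simp
    also have "\<dots> = (poly (pderiv p) c * poly (GP e) c - poly p c * poly (pderiv (GP e)) c)
      - (poly (pderiv p) a * poly (GP e) a - poly p a * poly (pderiv (GP e)) a)"
      by (rule polyint_green[OF p(5)])
    also have "\<dots> = psm F GP g e c - psp F GP g e a"
      unfolding psm_def psp_def using p gs[of a] gs[of c] by simp
    finally show ?thesis .
  qed
  have "(\<Sum>(a, c)\<in>consec (ecuts G P e). polyint (piece F e a c * dens \<mu> e) a c)
      = (\<Sum>(a, c)\<in>consec (ecuts G P e). psm F GP g e c - psp F GP g e a)"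
    using seg by (intro sum.cong refl) auto
  also have "\<dots> = (\<Sum>c\<in>ecuts G P e - {0}. psm F GP g e c - psp F GP g e c) + psp F GP g e (L e) - psp F GP g e 0"
    using consec_sum[OF ef(1,2)] ef(3,4) by simp
  also have "(\<Sum>c\<in>ecuts G P e - {0}. psm F GP g e c - psp F GP g e c)
      = (psm F GP g e (L e) - psp F GP g e (L e)) + (\<Sum>c\<in>cuts G P e. psm F GP g e c - psp F GP g e c)"
    unfolding ef(5) using finite_cuts[OF P] e ef(6) by simp
  also have "(\<Sum>c\<in>cuts G P e. psm F GP g e c - psp F GP g e c) = (\<Sum>c\<in>cuts G P e. (dminus F e c - dplus F e c) * g (Ep e c))"
    unfolding psm_def psp_def by (intro sum.cong refl) (simp add: algebra_simps)
  finally show ?thesis by simp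
qed

lemma hedge_green:
  assumes pot: "is_pot \<mu> g GP" and om: "omega_logP G P F" and ddc: "dd_cond P F" and P: "finite P" and d: "d \<in> D"
  shows "0 = (\<Sum>c\<in>cuts G P d. (dminus F d c - dplus F d c) * g (Ep d c)) + psp F GP g d (tailst G P d) - psp F GP g d 0"
proof -
  note hf = hcuts_facts[OF P d]
  have dE: "d \<notin> E" using d hedge_notE by blast
  have seg: "psm F GP g d c - psp F GP g d a = 0"
    if ac: "(a, c) \<in> consec ({0} \<union> cuts G P d)" for a c
  proof -
    from ac dE have ac': "(a, c) \<in> consec (if d \<in> E then ecuts G P d else {0} \<union> cuts G P d)" by simp
    have eED: "d \<in> E \<union> D" using d by simp
    obtain p where p0: "a < c" "0 \<le> a" "d \<in> E \<Longrightarrow> c \<le> L d" "\<And>s. a \<le> s \<Longrightarrow> s \<le> c \<Longrightarrow> F (Ep d s) = poly p s"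
      "pderiv (pderiv p) = 0" "piece F d a c = p" "dplus F d a = poly (pderiv p) a" "dminus F d c = poly (pderiv p) c"
      "poly (pderiv p) c = poly (pderiv p) a"
      by (rule seg_data[OF om ddc P eED ac']) blast
    have p: "a < c" "0 \<le> a" "\<And>s. a \<le> s \<Longrightarrow> s \<le> c \<Longrightarrow> F (Ep d s) = poly p s"
      "pderiv (pderiv p) = 0" "dplus F d a = poly (pderiv p) a" "dminus F d c = poly (pderiv p) c"
      "poly (pderiv p) c = poly (pderiv p) a" using p0 by auto
    have gs: "g (Ep d s) = poly (GP d) s" if "0 \<le> s" for s using pot d that unfolding is_pot_def by blast
    have GP2: "pderiv (pderiv (GP d)) = 0" using pot d unfolding is_pot_def by blast
    have "0 = polyint (p * - pderiv (pderiv (GP d))) a c" using GP2 by (simp add: polyint_def)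
    also have "\<dots> = (poly (pderiv p) c * poly (GP d) c - poly p c * poly (pderiv (GP d)) c)
      - (poly (pderiv p) a * poly (GP d) a - poly p a * poly (pderiv (GP d)) a)"
      by (rule polyint_green[OF p(4)])
    also have "\<dots> = psm F GP g d c - psp F GP g d a"
      unfolding psm_def psp_def using p gs[of a] gs[of c] by simp
    finally show ?thesis by simp
  qed
  have "0 = (\<Sum>(a, c)\<in>consec ({0} \<union> cuts G P d). psm F GP g d c - psp F GP g d a)"
    using seg by (intro sum.neutral[symmetric]) auto
  also have "\<dots> = (\<Sum>c\<in>cuts G P d. psm F GP g d c - psp F GP g d c) + psp F GP g d (tailst G P d) - psp F GP g d 0"
    using consec_sum[OF hf(1)] hf(2,3,4) by simp
  also have "(\<Sum>c\<in>cuts G P d. psm F GP g d c - psp F GP g d c) = (\<Sum>c\<in>cuts G P d. (dminus F d c - dplus F d c) * g (Ep d c))"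
    unfolding psm_def psp_def by (intro sum.cong refl) (simp add: algebra_simps)
  finally show ?thesis by simp
qed


lemma edge_end:
  assumes pot: "is_pot \<mu> g GP" and om: "omega_logP G P F" and ddc: "dd_cond P F" and P: "finite P" and e: "e \<in> E"
  shows "psm F GP g e (L e) = - psp F GP g (iv e) 0"
proof -
  note ef = ecuts_facts[OF P e]
  have LC: "L e \<in> ecuts G P e" unfolding ecuts_def by simp
  have "Min (ecuts G P e) < L e" using ef(3) len_pos[OF e] by simp
  from consec_left[OF ef(1) LC this] obtain a where ac: "(a, L e) \<in> consec (ecuts G P e)" by blast
  hence ac': "(a, L e) \<in> consec (if e \<in> E then ecuts G P e else {0} \<union> cuts G P e)" using e by simp
  have eED: "e \<in> E \<union> D" using e by simp
  obtain p where p0: "a < (L e)" "0 \<le> a" "e \<in> E \<Longrightarrow> (L e) \<le> L e" "\<And>s. a \<le> s \<Longrightarrow> s \<le> (L e) \<Longrightarrow> F (Ep e s) = poly p s"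
      "pderiv (pderiv p) = 0" "piece F e a (L e) = p" "dplus F e a = poly (pderiv p) a" "dminus F e (L e) = poly (pderiv p) (L e)"
      "poly (pderiv p) (L e) = poly (pderiv p) a"
    by (rule seg_data[OF om ddc P eED ac']) blast
  have p: "a < L e" "0 \<le> a" "\<And>s. a \<le> s \<Longrightarrow> s \<le> L e \<Longrightarrow> F (Ep e s) = poly p s"
    "dminus F e (L e) = poly (pderiv p) (L e)" using p0 by auto
  have resp: "\<And>t. 0 \<le> t \<Longrightarrow> t \<le> L e \<Longrightarrow> F (Ep e t) = F (Ep (iv e) (L e - t))"
    using om e unfolding omega_logP_def resp_def by blast
  have Fi: "F (Ep (iv e) s) = poly (pcompose p [:L e, -1:]) s" if "0 \<le> s" "s \<le> L e - a" for s
    using resp[of "L e - s"] p(3)[of "L e - s"] that p(1,2) by simp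
  have dpi: "dplus F (iv e) 0 = - poly (pderiv p) (L e)"
    using dplus_eq[of "L e - a" 0 F "iv e" "pcompose p [:L e, -1:]"] Fi p(1) by (simp add: pderiv_reflect)
  have F0: "F (Ep e (L e)) = F (Ep (iv e) 0)" using resp[of "L e"] len_pos[OF e] by simp
  have g0: "g (Ep e (L e)) = g (Ep (iv e) 0)"
  proof -
    have "g (Ep e (L e)) = poly (GP e) (L e)" using pot e len_pos[OF e] unfolding is_pot_def by (auto simp: less_imp_le)
    moreover have "g (Ep (iv e) 0) = poly (GP (iv e)) 0" using pot inv_in[OF e] len_pos[OF inv_in[OF e]] unfolding is_pot_def by (auto simp: less_imp_le)
    moreover have "GP (iv e) = pcompose (GP e) [:L e, -1:]" using pot e unfolding is_pot_def by blast
    ultimately show ?thesis by simp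
  qed
  have GPd: "poly (pderiv (GP e)) (L e) = - poly (pderiv (GP (iv e))) 0"
  proof -
    have "GP (iv e) = pcompose (GP e) [:L e, -1:]" using pot e unfolding is_pot_def by blast
    thus ?thesis by (simp add: pderiv_reflect)
  qed
  show ?thesis unfolding psm_def psp_def using p(4) dpi F0 g0 GPd by simp
qed

lemma green:
  assumes pot: "is_pot \<mu> g GP" and x: "valid_pt G x" and b: "valid_pt G b"
    and om: "omega_logP G {x, b} F" and lapd: "lap_is_dipole G x b F"
  shows "integP G {x, b} F \<mu> = g x - g b"
proof -
  define P where "P = {x, b}"
  have Pf: "finite P" unfolding P_def by simp
  have om': "omega_logP G P F" using om unfolding P_def .
  have ddc: "dd_cond P F" using lapd unfolding dd_cond_def lap_is_dipole_def P_def by auto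
  have jump: "\<And>e c. e \<in> E \<union> D \<Longrightarrow> c \<in> cuts G P e \<Longrightarrow> dminus F e c - dplus F e c = dlt G x (Ep e c) - dlt G b (Ep e c)"
    using lapd unfolding lap_is_dipole_def P_def by force
  have vtx: "\<And>v. v \<in> V \<Longrightarrow> (\<Sum>e \<in> {e \<in> E \<union> D. src G e = v}. dplus F e 0) = - (dlt G x (Vx v) - dlt G b (Vx v))"
    using lapd unfolding lap_is_dipole_def by force
  have tail: "\<And>d. d \<in> D \<Longrightarrow> dplus F d (tailst G P d) = 0"
    using lapd unfolding lap_is_dipole_def P_def by blast
  have respF: "\<And>e. e \<in> E \<union> D \<Longrightarrow> F (Ep e 0) = F (Vx (src G e))"
    using om unfolding omega_logP_def resp_def by blast
  have g0: "\<And>e. e \<in> E \<union> D \<Longrightarrow> g (Ep e 0) = g (Vx (src G e))"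
  proof -
    fix e assume e: "e \<in> E \<union> D"
    have "g (Ep e 0) = poly (GP e) 0" using pot e len_pos unfolding is_pot_def by (auto simp: less_imp_le)
    thus "g (Ep e 0) = g (Vx (src G e))" using pot e unfolding is_pot_def by simp
  qed
  define J where "J e = (\<Sum>c\<in>cuts G P e. (dlt G x (Ep e c) - dlt G b (Ep e c)) * g (Ep e c))" for e
  have Jeq: "(\<Sum>c\<in>cuts G P e. (dminus F e c - dplus F e c) * g (Ep e c)) = J e" if "e \<in> E \<union> D" for e
    unfolding J_def using jump that by (intro sum.cong refl) auto
  have A: "(\<Sum>e\<in>E. \<Sum>(a, c)\<in>consec (ecuts G P e). polyint (piece F e a c * dens \<mu> e) a c)
      = (\<Sum>e\<in>E. J e) - 2 * (\<Sum>e\<in>E. psp F GP g e 0)"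
  proof -
    have "(\<Sum>e\<in>E. \<Sum>(a, c)\<in>consec (ecuts G P e). polyint (piece F e a c * dens \<mu> e) a c)
        = (\<Sum>e\<in>E. J e - psp F GP g (iv e) 0 - psp F GP g e 0)"
      using edge_green[OF pot om' ddc Pf] edge_end[OF pot om' ddc Pf] Jeq by (intro sum.cong refl) auto
    also have "\<dots> = (\<Sum>e\<in>E. J e) - (\<Sum>e\<in>E. psp F GP g (iv e) 0) - (\<Sum>e\<in>E. psp F GP g e 0)"
      by (simp add: sum_subtractf)
    also have "(\<Sum>e\<in>E. psp F GP g (iv e) 0) = (\<Sum>e\<in>E. psp F GP g e 0)" by (rule sum_inv)
    finally show ?thesis by simp
  qed
  have C: "(\<Sum>d\<in>D. hm \<mu> d * F (Ep d (tailst G P d))) = (\<Sum>d\<in>D. J d - psp F GP g d 0)"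
  proof (intro sum.cong refl)
    fix d assume d: "d \<in> D"
    have hg: "0 = J d + psp F GP g d (tailst G P d) - psp F GP g d 0"
      using hedge_green[OF pot om' ddc Pf d] Jeq d by simp
    have GP2: "pderiv (pderiv (GP d)) = 0" "poly (pderiv (GP d)) 0 = hm \<mu> d" using pot d unfolding is_pot_def by auto
    have "poly (pderiv (GP d)) (tailst G P d) = hm \<mu> d"
      using pderiv_zero_const[OF GP2(1), of "tailst G P d" 0] GP2(2) by simp
    hence "psp F GP g d (tailst G P d) = - hm \<mu> d * F (Ep d (tailst G P d))"
      unfolding psp_def using tail[OF d] by simp
    thus "hm \<mu> d * F (Ep d (tailst G P d)) = J d - psp F GP g d 0" using hg by simp
  qed
  have Vs: "(\<Sum>e\<in>E. psp F GP g e 0) + (\<Sum>d\<in>D. psp F GP g d 0)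
      = (\<Sum>v\<in>V. - (dlt G x (Vx v) - dlt G b (Vx v)) * g (Vx v) + vm \<mu> v * F (Vx v))"
  proof -
    have "(\<Sum>e\<in>E. psp F GP g e 0) + (\<Sum>d\<in>D. psp F GP g d 0) = (\<Sum>e\<in>E \<union> D. psp F GP g e 0)"
      using finE finD disj by (simp add: sum.union_disjoint)
    also have "\<dots> = (\<Sum>v\<in>V. \<Sum>e\<in>{e \<in> E \<union> D. src G e = v}. psp F GP g e 0)"
      by (rule sum_group_src[symmetric]) simp
    also have "\<dots> = (\<Sum>v\<in>V. - (dlt G x (Vx v) - dlt G b (Vx v)) * g (Vx v) + vm \<mu> v * F (Vx v))"
    proof (intro sum.cong refl)
      fix v assume v: "v \<in> V"
      have "(\<Sum>e\<in>{e \<in> E \<union> D. src G e = v}. psp F GP g e 0)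
          = (\<Sum>e\<in>{e \<in> E \<union> D. src G e = v}. dplus F e 0 * g (Vx v) - F (Vx v) * poly (pderiv (GP e)) 0)"
        unfolding psp_def using respF g0 by (intro sum.cong refl) auto
      also have "\<dots> = (\<Sum>e\<in>{e \<in> E \<union> D. src G e = v}. dplus F e 0) * g (Vx v)
          - F (Vx v) * (\<Sum>e\<in>{e \<in> E \<union> D. src G e = v}. poly (pderiv (GP e)) 0)"
        by (simp add: sum_subtractf sum_distrib_left sum_distrib_right)
      also have "\<dots> = - (dlt G x (Vx v) - dlt G b (Vx v)) * g (Vx v) + vm \<mu> v * F (Vx v)"
        using vtx[OF v] pot v unfolding is_pot_def by simp
      finally show "(\<Sum>e\<in>{e \<in> E \<union> D. src G e = v}. psp F GP g e 0)
          = - (dlt G x (Vx v) - dlt G b (Vx v)) * g (Vx v) + vm \<mu> v * F (Vx v)" .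
    qed
    finally show ?thesis .
  qed
  have "integP G P F \<mu> = (\<Sum>e\<in>E. J e) / 2 + (\<Sum>d\<in>D. J d)
      + (\<Sum>v\<in>V. (dlt G x (Vx v) - dlt G b (Vx v)) * g (Vx v))"
  proof -
    have "integP G P F \<mu> = ((\<Sum>e\<in>E. J e) - 2 * (\<Sum>e\<in>E. psp F GP g e 0)) / 2
        + (\<Sum>v\<in>V. vm \<mu> v * F (Vx v)) + (\<Sum>d\<in>D. J d - psp F GP g d 0)"
      unfolding integP_def A C by simp
    also have "\<dots> = (\<Sum>e\<in>E. J e) / 2 + (\<Sum>d\<in>D. J d) + (\<Sum>v\<in>V. vm \<mu> v * F (Vx v))
        - ((\<Sum>e\<in>E. psp F GP g e 0) + (\<Sum>d\<in>D. psp F GP g d 0))"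
      by (simp add: sum_subtractf field_simps)
    also have "\<dots> = (\<Sum>e\<in>E. J e) / 2 + (\<Sum>d\<in>D. J d)
      + (\<Sum>v\<in>V. (dlt G x (Vx v) - dlt G b (Vx v)) * g (Vx v))"
    proof -
      have "(\<Sum>v\<in>V. - (dlt G x (Vx v) - dlt G b (Vx v)) * g (Vx v) + vm \<mu> v * F (Vx v))
        = (\<Sum>v\<in>V. vm \<mu> v * F (Vx v)) - (\<Sum>v\<in>V. (dlt G x (Vx v) - dlt G b (Vx v)) * g (Vx v))"
        by (simp add: sum_subtractf[symmetric] algebra_simps)
      thus ?thesis unfolding Vs by simp
    qed
    finally show ?thesis .
  qed
  also have "\<dots> = ((\<Sum>e\<in>E. \<Sum>c\<in>cuts G P e. dlt G x (Ep e c) * g (Ep e c)) / 2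
       + (\<Sum>d\<in>D. \<Sum>c\<in>cuts G P d. dlt G x (Ep d c) * g (Ep d c))
       + (\<Sum>v\<in>V. dlt G x (Vx v) * g (Vx v)))
     - ((\<Sum>e\<in>E. \<Sum>c\<in>cuts G P e. dlt G b (Ep e c) * g (Ep e c)) / 2
       + (\<Sum>d\<in>D. \<Sum>c\<in>cuts G P d. dlt G b (Ep d c) * g (Ep d c))
       + (\<Sum>v\<in>V. dlt G b (Vx v) * g (Vx v)))"
    unfolding J_def by (simp add: left_diff_distrib sum_subtractf diff_divide_distrib)
  also have "\<dots> = g x - g b"
    using point_sum[OF pot x _ Pf] point_sum[OF pot b _ Pf] unfolding P_def by simp
  finally show ?thesis unfolding P_def .
qed


definition kh :: "('v, 'e) pt \<Rightarrow> 'e \<Rightarrow> bool" where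
  "kh p e = (case cpt G p of Vx _ \<Rightarrow> False | Ep e0 t0 \<Rightarrow> e = e0 \<or> (e0 \<in> E \<and> e = iv e0))"

definition kt :: "('v, 'e) pt \<Rightarrow> 'e \<Rightarrow> rat" where
  "kt p e = (case cpt G p of Vx _ \<Rightarrow> 0 | Ep e0 t0 \<Rightarrow> if e = e0 then t0 else L e0 - t0)"

definition kb :: "('v, 'e) pt \<Rightarrow> 'e \<Rightarrow> rat" where
  "kb p e = (case cpt G p of Vx _ \<Rightarrow> 0 | Ep e0 t0 \<Rightarrow>
     if e0 \<in> E then (if e = e0 then (L e0 - t0) / L e0 else if e = iv e0 then t0 / L e0 else 0)
     else (if e = e0 then 1 else 0))"

lemma kpos0:
  assumes p: "valid_pt G p" and h: "kh p e"
  shows "0 < kt p e \<and> e \<in> E \<union> D \<and> (e \<in> E \<longrightarrow> kt p e < L e)"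
  using p
proof (cases rule: cpt_cases)
  case (V v)
  then show ?thesis using h by (auto simp: kh_def)
next
  case (E e0 t0)
  have "iv e0 \<noteq> e0" using inv_neq E by simp
  then show ?thesis
    using h E inv_in len_inv by (auto simp: kh_def kt_def)
next
  case (D d0 t0)
  then show ?thesis
    using h hedge_notE by (auto simp: kh_def kt_def)
qed

lemma kpos:
  assumes p: "valid_pt G p" and h: "kh p e"
  shows "0 < kt p e" "e \<in> E \<union> D" "e \<in> E \<Longrightarrow> kt p e < L e"
  using kpos0[OF p h] by auto

lemma kcut:
  assumes p: "valid_pt G p" and h: "kh p e" and pP: "p \<in> P"
  shows "kt p e \<in> cuts G P e"
  using p
proof (cases rule: cpt_cases)
  case (V v)
  then show ?thesis using h by (auto simp: kh_def)
next
  case (E e0 t0)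
  show ?thesis
  proof (cases "e = e0")
    case True
    then show ?thesis using E pP by (auto simp: kt_def cuts_E)
  next
    case False
    hence "e = iv e0" using h E by (auto simp: kh_def)
    then show ?thesis using E pP inv_in inv_inv inv_neq len_inv by (auto simp: kt_def cuts_E)
  qed
next
  case (D d0 t0)
  hence "e = d0" using h hedge_notE by (auto simp: kh_def)
  then show ?thesis using D pP by (auto simp: kt_def cuts_D)
qed

lemma kdlt:
  assumes p: "valid_pt G p" and e: "e \<in> E \<union> D" and t: "0 < t" "e \<in> E \<longrightarrow> t < L e"
  shows "dlt G p (Ep e t) = (if kh p e \<and> kt p e = t then 1 else 0)"
proof (cases "e \<in> E")
  case True
  have sp: "same_pt G p (Ep e t) \<longleftrightarrow> cpt G p = Ep e t \<or> cpt G p = Ep (iv e) (L e - t)"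
    using same_E[OF True t(1)] t(2) True by blast
  from p show ?thesis
  proof (cases rule: cpt_cases)
    case (V v)
    then show ?thesis unfolding dlt_def sp by (simp add: kh_def)
  next
    case (E e0 t0)
    show ?thesis
    proof (cases "e = e0")
      case True
      have "iv e0 \<noteq> e0" using inv_neq E by simp
      then show ?thesis unfolding dlt_def sp using E True by (auto simp: kh_def kt_def)
    next
      case False
      show ?thesis
      proof (cases "e = iv e0")
        case True2: True
        have "e0 = iv e" using True2 E inv_inv by simp
        then show ?thesis unfolding dlt_def sp using E True2 False len_inv by (auto simp: kh_def kt_def)
      next
        case False2: False
        have "e0 \<noteq> iv e" using False2 inv_inv[OF True] by auto
        then show ?thesis unfolding dlt_def sp using E False False2 by (auto simp: kh_def kt_def)
      qed
    qed
  next
    case (D d0 t0)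
    have "d0 \<noteq> e" "d0 \<noteq> iv e" using D True inv_in hedge_notE by auto
    then show ?thesis unfolding dlt_def sp using D hedge_notE by (auto simp: kh_def kt_def)
  qed
next
  case False
  hence eD: "e \<in> D" using e by simp
  have sp: "same_pt G p (Ep e t) \<longleftrightarrow> cpt G p = Ep e t" using same_D[OF eD t(1)] by blast
  from p show ?thesis
  proof (cases rule: cpt_cases)
    case (V v)
    then show ?thesis unfolding dlt_def sp by (simp add: kh_def)
  next
    case (E e0 t0)
    have "e \<noteq> e0" "e \<noteq> iv e0" using E False inv_in by auto
    then show ?thesis unfolding dlt_def sp using E by (auto simp: kh_def kt_def)
  next
    case (D d0 t0)
    then show ?thesis unfolding dlt_def sp using hedge_notE by (auto simp: kh_def kt_def)
  qed
qed

lemma kbD: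
  assumes p: "valid_pt G p" and d: "d \<in> D"
  shows "kb p d = (if kh p d then 1 else 0)"
  using p
proof (cases rule: cpt_cases)
  case (V v)
  then show ?thesis by (simp add: kh_def kb_def)
next
  case (E e0 t0)
  have "d \<noteq> e0" "d \<noteq> iv e0" using E d inv_in hedge_notE by auto
  then show ?thesis using E by (simp add: kh_def kb_def)
next
  case (D d0 t0)
  then show ?thesis using hedge_notE by (simp add: kh_def kb_def)
qed

lemma ksym:
  assumes p: "valid_pt G p" and e: "e \<in> E" and t: "0 \<le> t" "t \<le> L e"
  shows "kb p e * t - (if kh p e then 1 else 0) * max 0 (t - kt p e)
    = kb p (iv e) * (L e - t) - (if kh p (iv e) then 1 else 0) * max 0 (L e - t - kt p (iv e))"
  using p
proof (cases rule: cpt_cases)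
  case (V v)
  then show ?thesis by (simp add: kh_def kb_def kt_def)
next
  case (E e0 t0)
  have Lp: "L e0 > 0" using len_pos E by simp
  show ?thesis
  proof (cases "e = e0")
    case True
    have ne: "iv e0 \<noteq> e0" using inv_neq E by simp
    have "(L e0 - t0) / L e0 * t - max 0 (t - t0) = t0 / L e0 * (L e0 - t) - max 0 (L e0 - t - (L e0 - t0))"
      using Lp by (auto simp: max_def field_simps)
    then show ?thesis using E True ne by (simp add: kh_def kb_def kt_def)
  next
    case False
    show ?thesis
    proof (cases "e = iv e0")
      case True2: True
      have ie: "iv e = e0" using True2 E inv_inv by simp
      have Le: "L e = L e0" using True2 E len_inv by simp
      have "t0 / L e0 * t - max 0 (t - (L e0 - t0)) = (L e0 - t0) / L e0 * (L e0 - t) - max 0 (L e0 - t - t0)"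
        using Lp by (auto simp: max_def field_simps)
      then show ?thesis using E True2 False ie Le by (simp add: kh_def kb_def kt_def)
    next
      case False2: False
      have "iv e \<noteq> e0" "iv e \<noteq> iv e0" using False False2 E e inv_inv by metis+
      then show ?thesis using E False False2 by (simp add: kh_def kb_def kt_def)
    qed
  qed
next
  case (D d0 t0)
  have "e \<noteq> d0" "iv e \<noteq> d0" using D e inv_in hedge_notE by auto
  then show ?thesis using D hedge_notE by (simp add: kh_def kb_def kt_def)
qed

lemma kmass:
  assumes p: "valid_pt G p"
  shows "(\<Sum>v\<in>V. dlt G p (Vx v)) + (\<Sum>e\<in>E \<union> D. kb p e) = 1"
proof -
  have dV: "\<And>v. dlt G p (Vx v) = (if cpt G p = Vx v then 1 else 0)"
    unfolding dlt_def using same_Vx by auto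
  from p show ?thesis
  proof (cases rule: cpt_cases)
    case (V v0)
    have "(\<Sum>v\<in>V. dlt G p (Vx v)) = (\<Sum>v\<in>V. if v = v0 then 1 else 0)"
      using V by (intro sum.cong refl) (auto simp: dV)
    also have "\<dots> = 1" using V finV by simp
    finally show ?thesis using V by (simp add: kb_def)
  next
    case (E e0 t0)
    have "(\<Sum>v\<in>V. dlt G p (Vx v)) = 0" using E by (intro sum.neutral) (auto simp: dV)
    moreover have "(\<Sum>e\<in>E \<union> D. kb p e) = (\<Sum>e\<in>E \<union> D. (if e = e0 then (L e0 - t0) / L e0 else 0) + (if e = iv e0 then t0 / L e0 else 0))"
      using E inv_neq[OF E(1)] by (intro sum.cong refl) (auto simp: kb_def)
    moreover have "\<dots> = (L e0 - t0) / L e0 + t0 / L e0"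
      using E inv_in finE finD by (simp add: sum.distrib)
    moreover have "(L e0 - t0) / L e0 + t0 / L e0 = 1" using len_pos[of e0] E by (simp add: field_simps)
    ultimately show ?thesis by simp
  next
    case (D d0 t0)
    have "(\<Sum>v\<in>V. dlt G p (Vx v)) = 0" using D by (intro sum.neutral) (auto simp: dV)
    moreover have "(\<Sum>e\<in>E \<union> D. kb p e) = (\<Sum>e\<in>E \<union> D. if e = d0 then 1 else 0)"
      using D hedge_notE by (intro sum.cong refl) (auto simp: kb_def)
    moreover have "\<dots> = 1" using D finE finD by simp
    ultimately show ?thesis by simp
  qed
qed


section \<open>Existence of the Green function of a dipole\<close>

lemma ecuts_range: "e \<in> E \<Longrightarrow> c \<in> ecuts G P e \<Longrightarrow> 0 \<le> c \<and> c \<le> L e"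
  unfolding ecuts_def using cuts_range_E[of e c P] len_pos[of e] by (auto simp: less_imp_le)

lemma cut_le_tailst: "finite P \<Longrightarrow> d \<in> D \<Longrightarrow> c \<in> cuts G P d \<Longrightarrow> c \<le> tailst G P d"
  unfolding tailst_def using finite_cuts[of P d] by (intro Max_ge) auto

lemma F_exists:
  assumes x: "valid_pt G x" and b: "valid_pt G b"
  shows "\<exists>F. omega_logP G {x, b} F \<and> lap_is_dipole G x b F"
proof -
  define P where "P = {x, b}"
  have Pf: "finite P" unfolding P_def by simp
  have xP: "x \<in> P" and bP: "b \<in> P" unfolding P_def by auto
  define mp where "mp p v = dlt G p (Vx v) + (\<Sum>e\<in>{e \<in> E \<union> D. src G e = v}. kb p e)" for p v
  have summp: "(\<Sum>v\<in>V. mp p v) = 1" if "valid_pt G p" for p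
  proof -
    have gs: "(\<Sum>v\<in>V. \<Sum>e\<in>{e \<in> E \<union> D. src G e = v}. kb p e) = (\<Sum>e\<in>E \<union> D. kb p e)"
      by (rule sum_group_src) simp
    show ?thesis unfolding mp_def sum.distrib gs using kmass[OF that] .
  qed
  define \<nu> :: "('v, 'e) meas" where "\<nu> = \<lparr>dens = (\<lambda>_. 0), vm = (\<lambda>v. if v \<in> V then mp x v - mp b v else 0), hm = (\<lambda>_. 0)\<rparr>"
  have mnu: "is_meas G \<nu>" unfolding is_meas_def \<nu>_def by simp
  have tnu: "total_mass G \<nu> = 0"
    unfolding total_mass_def \<nu>_def using summp[OF x] summp[OF b] by (simp add: polyint_def sum_subtractf)
  obtain g GP where pot: "is_pot \<nu> g GP" using pot_exists[OF mnu tnu] by blast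
  have GPE: "\<And>e s. e \<in> E \<Longrightarrow> 0 \<le> s \<Longrightarrow> s \<le> L e \<Longrightarrow> g (Ep e s) = poly (GP e) s"
    and GPD: "\<And>d s. d \<in> D \<Longrightarrow> 0 \<le> s \<Longrightarrow> g (Ep d s) = poly (GP d) s"
    and GP0: "\<And>e. e \<in> E \<union> D \<Longrightarrow> poly (GP e) 0 = g (Vx (src G e))"
    and GPi: "\<And>e. e \<in> E \<Longrightarrow> GP (iv e) = pcompose (GP e) [:L e, -1:]"
    and GP2E: "\<And>e. e \<in> E \<Longrightarrow> pderiv (pderiv (GP e)) = 0"
    and GP2D: "\<And>d. d \<in> D \<Longrightarrow> pderiv (pderiv (GP d)) = 0 \<and> poly (pderiv (GP d)) 0 = 0"
    and GPv: "\<And>v. v \<in> V \<Longrightarrow> mp x v - mp b v = - (\<Sum>e\<in>{e \<in> E \<union> D. src G e = v}. poly (pderiv (GP e)) 0)"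
    using pot unfolding is_pot_def \<nu>_def by auto
  define q where "q e = GP e + [:0, kb x e - kb b e:]" for e
  define k1 where "k1 e = (if kh x e then - 1 else (0::rat))" for e
  define k2 where "k2 e = (if kh b e then 1 else (0::rat))" for e
  define F where "F z = (case z of Vx v \<Rightarrow> g (Vx v) | Ep e s \<Rightarrow> g (Ep e s) + (kb x e - kb b e) * s
      + k1 e * max 0 (s - kt x e) + k2 e * max 0 (s - kt b e))" for z
  have q2: "pderiv (pderiv (q e)) = 0" if "e \<in> E \<union> D" for e
    unfolding q_def using that GP2E GP2D by (auto simp: pderiv_add pderiv_pCons)
  have FE: "F (Ep e s) = rform (q e) (k1 e) (kt x e) (k2 e) (kt b e) s" if "e \<in> E" "0 \<le> s" "s \<le> L e" for e s
    unfolding F_def rform_def q_def using GPE[OF that] by (simp add: algebra_simps)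
  have FD: "F (Ep d s) = rform (q d) (k1 d) (kt x d) (k2 d) (kt b d) s" if "d \<in> D" "0 \<le> s" for d s
    unfolding F_def rform_def q_def using GPD[OF that] by (simp add: algebra_simps)
  have F_dom: "F (Ep e s) = rform (q e) (k1 e) (kt x e) (k2 e) (kt b e) s"
    if "e \<in> E \<union> D" "0 \<le> s" "e \<in> E \<longrightarrow> s \<le> L e" for e s
    using FE FD that by auto
  have k1c: "k1 e \<noteq> 0 \<longrightarrow> kt x e \<in> cuts G P e" for e unfolding k1_def using kcut[OF x _ xP] by auto
  have k2c: "k2 e \<noteq> 0 \<longrightarrow> kt b e \<in> cuts G P e" for e unfolding k2_def using kcut[OF b _ bP] by auto
  have k1p: "k1 e \<noteq> 0 \<longrightarrow> 0 < kt x e" for e unfolding k1_def using kpos(1)[OF x] by auto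
  have k2p: "k2 e \<noteq> 0 \<longrightarrow> 0 < kt b e" for e unfolding k2_def using kpos(1)[OF b] by auto
  have dplusF: "dplus F e t = poly (pderiv (q e)) t + (if kt x e \<le> t then k1 e else 0) + (if kt b e \<le> t then k2 e else 0)"
    if e: "e \<in> E \<union> D" and t: "0 \<le> t" "e \<in> E \<longrightarrow> t < L e" for e t
  proof -
    define \<epsilon>0 where "\<epsilon>0 = (if e \<in> E then L e - t else 1)"
    have "\<epsilon>0 > 0" unfolding \<epsilon>0_def using t by auto
    from rform_right[OF this, of t "q e" "k1 e" "kt x e" "k2 e" "kt b e"] obtain \<epsilon> where
      eps: "\<epsilon> > 0" "\<epsilon> \<le> \<epsilon>0" "\<forall>s. t \<le> s \<and> s \<le> t + \<epsilon> \<longrightarrow> rform (q e) (k1 e) (kt x e) (k2 e) (kt b e) s = poly (rpR (q e) (k1 e) (kt x e) (k2 e) (kt b e) t) s"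
      by blast
    have "dplus F e t = poly (pderiv (rpR (q e) (k1 e) (kt x e) (k2 e) (kt b e) t)) t"
    proof (rule dplus_eq[OF eps(1)])
      fix s assume s: "t \<le> s" "s \<le> t + \<epsilon>"
      have "e \<in> E \<longrightarrow> s \<le> L e" using s eps(2) unfolding \<epsilon>0_def by auto
      thus "F (Ep e s) = poly (rpR (q e) (k1 e) (kt x e) (k2 e) (kt b e) t) s"
        using F_dom[OF e] s t eps(3) by simp
    qed
    thus ?thesis by (simp add: rpR_d1)
  qed
  have dminusF: "dminus F e t = poly (pderiv (q e)) t + (if kt x e < t then k1 e else 0) + (if kt b e < t then k2 e else 0)"
    if e: "e \<in> E \<union> D" and t: "0 < t" "e \<in> E \<longrightarrow> t \<le> L e" for e t
  proof -
    have "t > 0" using t by simp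
    from rform_left[OF this, of t "q e" "k1 e" "kt x e" "k2 e" "kt b e"] obtain \<epsilon> where
      eps: "\<epsilon> > 0" "\<epsilon> \<le> t" "\<forall>s. t - \<epsilon> \<le> s \<and> s \<le> t \<longrightarrow> rform (q e) (k1 e) (kt x e) (k2 e) (kt b e) s = poly (rpL (q e) (k1 e) (kt x e) (k2 e) (kt b e) t) s"
      by blast
    have "dminus F e t = poly (pderiv (rpL (q e) (k1 e) (kt x e) (k2 e) (kt b e) t)) t"
    proof (rule dminus_eq[OF eps(1)])
      fix s assume s: "t - \<epsilon> \<le> s" "s \<le> t"
      thus "F (Ep e s) = poly (rpL (q e) (k1 e) (kt x e) (k2 e) (kt b e) t) s"
        using F_dom[OF e, of s] s t eps by auto
    qed
    thus ?thesis by (simp add: rpL_d1)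
  qed
  have resp: "resp G F"
    unfolding resp_def
  proof (intro conjI ballI allI impI)
    fix e assume e: "e \<in> E \<union> D"
    have "k1 e * max 0 (0 - kt x e) = 0" using k1p[of e] by (cases "k1 e = 0") (auto simp: max_def)
    moreover have "k2 e * max 0 (0 - kt b e) = 0" using k2p[of e] by (cases "k2 e = 0") (auto simp: max_def)
    moreover have "g (Ep e 0) = g (Vx (src G e))"
      using GP0[OF e] GPE[of e 0] GPD[of e 0] e len_pos[of e] by (auto simp: less_imp_le)
    ultimately show "F (Ep e 0) = F (Vx (src G e))" unfolding F_def by (simp del: mult_eq_0_iff)
  next
    fix e t assume e: "e \<in> E" and t: "0 \<le> t \<and> t \<le> L e"
    have ie: "iv e \<in> E" "L (iv e) = L e" using inv_in[OF e] len_inv[OF e] by auto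
    have "g (Ep e t) = g (Ep (iv e) (L e - t))"
      using GPE[OF e, of t] GPE[OF ie(1), of "L e - t"] GPi[OF e] t ie by simp
    moreover have "kb x e * t + k1 e * max 0 (t - kt x e) = kb x (iv e) * (L e - t) + k1 (iv e) * max 0 (L e - t - kt x (iv e))"
      using ksym[OF x e, of t] t unfolding k1_def by (simp split: if_splits)
    moreover have "kb b e * t - k2 e * max 0 (t - kt b e) = kb b (iv e) * (L e - t) - k2 (iv e) * max 0 (L e - t - kt b (iv e))"
      using ksym[OF b e, of t] t unfolding k2_def by (simp split: if_splits)
    ultimately show "F (Ep e t) = F (Ep (iv e) (L e - t))" unfolding F_def by (simp add: algebra_simps)
  qed
  have segpoly: "\<exists>p. \<forall>s. a \<le> s \<and> s \<le> c \<longrightarrow> F (Ep e s) = poly p s"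
    if e: "e \<in> E \<union> D" and ac: "(a, c) \<in> consec C" and CC: "cuts G P e \<subseteq> C"
      and rng: "\<And>y. y \<in> C \<Longrightarrow> 0 \<le> y \<and> (e \<in> E \<longrightarrow> y \<le> L e)" for e a c C
  proof -
    have aC: "a \<in> C" "c \<in> C" using ac unfolding consec_def by auto
    have c1: "k1 e \<noteq> 0 \<longrightarrow> c \<le> kt x e \<or> kt x e \<le> a" using k1c[of e] CC consec_between[OF ac] by blast
    have c2: "k2 e \<noteq> 0 \<longrightarrow> c \<le> kt b e \<or> kt b e \<le> a" using k2c[of e] CC consec_between[OF ac] by blast
    have "F (Ep e s) = poly (rpR (q e) (k1 e) (kt x e) (k2 e) (kt b e) a) s" if s: "a \<le> s" "s \<le> c" for s
    proof -
      have "0 \<le> s" "e \<in> E \<longrightarrow> s \<le> L e" using rng[OF aC(1)] rng[OF aC(2)] s by auto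
      hence "F (Ep e s) = rform (q e) (k1 e) (kt x e) (k2 e) (kt b e) s" using F_dom[OF e] by blast
      also have "\<dots> = poly (rpR (q e) (k1 e) (kt x e) (k2 e) (kt b e) a) s" by (rule rform_seg[OF s c1 c2])
      finally show ?thesis .
    qed
    thus ?thesis by blast
  qed
  have om: "omega_logP G P F"
    unfolding omega_logP_def
  proof (intro conjI ballI)
    show "resp G F" by (rule resp)
  next
    fix e ac assume e: "e \<in> E" and ac: "ac \<in> consec (ecuts G P e)"
    obtain a c where acp: "ac = (a, c)" by (cases ac)
    have "\<exists>p. \<forall>s. a \<le> s \<and> s \<le> c \<longrightarrow> F (Ep e s) = poly p s"
      by (rule segpoly[of e a c "ecuts G P e"]) (use e ac acp ecuts_range[OF e] in \<open>auto simp: ecuts_def\<close>)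
    thus "case ac of (a, c) \<Rightarrow> \<exists>p. \<forall>s. a \<le> s \<and> s \<le> c \<longrightarrow> F (Ep e s) = poly p s" using acp by simp
  next
    fix d ac assume d: "d \<in> D" and ac: "ac \<in> consec ({0} \<union> cuts G P d)"
    obtain a c where acp: "ac = (a, c)" by (cases ac)
    have "\<exists>p. \<forall>s. a \<le> s \<and> s \<le> c \<longrightarrow> F (Ep d s) = poly p s"
      by (rule segpoly[of d a c "{0} \<union> cuts G P d"]) (use d ac acp hedge_notE cuts_range[of _ P d] in \<open>auto simp: less_imp_le\<close>)
    thus "case ac of (a, c) \<Rightarrow> \<exists>p. \<forall>s. a \<le> s \<and> s \<le> c \<longrightarrow> F (Ep d s) = poly p s" using acp by simp
  next
    fix d assume d: "d \<in> D"
    define T where "T = tailst G P d"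
    have T0: "0 \<le> T" unfolding T_def using hcuts_facts[OF Pf d] by simp
    define R where "R = rpR (q d) (k1 d) (kt x d) (k2 d) (kt b d) T"
    have "F (Ep d s) = poly R s" if s: "T \<le> s" for s
    proof -
      have c1: "k1 d \<noteq> 0 \<longrightarrow> s \<le> kt x d \<or> kt x d \<le> T" using k1c[of d] cut_le_tailst[OF Pf d] unfolding T_def by blast
      have c2: "k2 d \<noteq> 0 \<longrightarrow> s \<le> kt b d \<or> kt b d \<le> T" using k2c[of d] cut_le_tailst[OF Pf d] unfolding T_def by blast
      have "F (Ep d s) = rform (q d) (k1 d) (kt x d) (k2 d) (kt b d) s" using FD[OF d] s T0 by simp
      also have "\<dots> = poly R s" unfolding R_def by (rule rform_seg[OF s order_refl c1 c2])
      finally show ?thesis .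
    qed
    moreover have "pderiv (pderiv R) = 0" unfolding R_def rpR_d2 using q2 d by simp
    ultimately have "\<forall>s. T \<le> s \<longrightarrow> F (Ep d s) = poly R 0 + poly (pderiv R) 0 * s"
      using pderiv2_zero_linear by metis
    thus "\<exists>\<alpha> \<beta>. \<forall>s. tailst G P d \<le> s \<longrightarrow> F (Ep d s) = \<alpha> + \<beta> * s" unfolding T_def by blast
  qed
  have lapd: "lap_is_dipole G x b F"
    unfolding lap_is_dipole_def P_def[symmetric]
  proof (intro conjI ballI allI impI)
    fix e t assume e: "e \<in> E \<union> D" and t: "0 < t \<and> (e \<in> E \<longrightarrow> t < L e) \<and> t \<notin> cuts G P e"
    define \<epsilon>0 where "\<epsilon>0 = (if e \<in> E then min t (L e - t) else t)"
    have "\<epsilon>0 > 0" unfolding \<epsilon>0_def using t by auto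
    moreover have "k1 e \<noteq> 0 \<longrightarrow> kt x e \<noteq> t" using k1c[of e] t by auto
    moreover have "k2 e \<noteq> 0 \<longrightarrow> kt b e \<noteq> t" using k2c[of e] t by auto
    ultimately obtain \<epsilon> where eps: "\<epsilon> > 0" "\<epsilon> \<le> \<epsilon>0"
      "\<forall>s. t - \<epsilon> \<le> s \<and> s \<le> t + \<epsilon> \<longrightarrow> rform (q e) (k1 e) (kt x e) (k2 e) (kt b e) s = poly (rpR (q e) (k1 e) (kt x e) (k2 e) (kt b e) (t - \<epsilon>)) s"
      using rform_both by blast
    have "dd F e t = poly (pderiv (pderiv (rpR (q e) (k1 e) (kt x e) (k2 e) (kt b e) (t - \<epsilon>)))) t"
    proof (rule dd_eq[OF eps(1)])
      fix s assume s: "t - \<epsilon> \<le> s" "s \<le> t + \<epsilon>"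
      have "0 \<le> s" "e \<in> E \<longrightarrow> s \<le> L e" using s eps(2) unfolding \<epsilon>0_def by (auto split: if_splits)
      thus "F (Ep e s) = poly (rpR (q e) (k1 e) (kt x e) (k2 e) (kt b e) (t - \<epsilon>)) s"
        using F_dom[OF e] s eps(3) by auto
    qed
    thus "- dd F e t = 0" using q2[OF e] by (simp add: rpR_d2)
  next
    fix v assume v: "v \<in> V"
    have "(\<Sum>e\<in>{e \<in> E \<union> D. src G e = v}. dplus F e 0)
        = (\<Sum>e\<in>{e \<in> E \<union> D. src G e = v}. poly (pderiv (GP e)) 0 + (kb x e - kb b e))"
    proof (intro sum.cong refl)
      fix e assume "e \<in> {e \<in> E \<union> D. src G e = v}"
      hence e: "e \<in> E \<union> D" by simp
      have "dplus F e 0 = poly (pderiv (q e)) 0 + (if kt x e \<le> 0 then k1 e else 0) + (if kt b e \<le> 0 then k2 e else 0)"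
        using dplusF[OF e] len_pos by auto
      moreover have "(if kt x e \<le> 0 then k1 e else 0) = 0" using k1p[of e] by auto
      moreover have "(if kt b e \<le> 0 then k2 e else 0) = 0" using k2p[of e] by auto
      ultimately show "dplus F e 0 = poly (pderiv (GP e)) 0 + (kb x e - kb b e)"
        unfolding q_def by (simp add: pderiv_add pderiv_pCons)
    qed
    also have "\<dots> = (\<Sum>e\<in>{e \<in> E \<union> D. src G e = v}. poly (pderiv (GP e)) 0)
        + (\<Sum>e\<in>{e \<in> E \<union> D. src G e = v}. kb x e) - (\<Sum>e\<in>{e \<in> E \<union> D. src G e = v}. kb b e)"
      by (simp add: sum.distrib sum_subtractf)
    also have "\<dots> = - (dlt G x (Vx v) - dlt G b (Vx v))"
      using GPv[OF v] unfolding mp_def by simp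
    finally show "- (\<Sum>e\<in>{e \<in> E \<union> D. src G e = v}. dplus F e 0) = dlt G x (Vx v) - dlt G b (Vx v)" by simp
  next
    fix e t assume e: "e \<in> E \<union> D" and t: "t \<in> cuts G P e"
    have t0: "0 < t" "e \<in> E \<longrightarrow> t < L e" using cuts_range[OF t] cuts_range_E[of e t P] t by auto
    have "dminus F e t - dplus F e t = - (if kt x e = t then k1 e else 0) - (if kt b e = t then k2 e else 0)"
      using dplusF[OF e _ t0(2)] dminusF[OF e t0(1)] t0 by auto
    also have "\<dots> = dlt G x (Ep e t) - dlt G b (Ep e t)"
      unfolding kdlt[OF x e t0] kdlt[OF b e t0] k1_def k2_def by auto
    finally show "- (dplus F e t - dminus F e t) = dlt G x (Ep e t) - dlt G b (Ep e t)" by simp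
  next
    fix d assume d: "d \<in> D"
    define T where "T = tailst G P d"
    have T0: "0 \<le> T" unfolding T_def using hcuts_facts[OF Pf d] by simp
    have dE: "d \<in> E \<union> D" "d \<notin> E" using d hedge_notE by auto
    have "dplus F d T = poly (pderiv (q d)) T + (if kt x d \<le> T then k1 d else 0) + (if kt b d \<le> T then k2 d else 0)"
      using dplusF[OF dE(1) T0] dE by simp
    moreover have "poly (pderiv (GP d)) T = 0" using GP2D[OF d] pderiv_zero_const[of "pderiv (GP d)" T 0] by simp
    moreover have "(if kt x d \<le> T then k1 d else 0) = k1 d" using k1c[of d] cut_le_tailst[OF Pf d] unfolding T_def by auto
    moreover have "(if kt b d \<le> T then k2 d else 0) = k2 d" using k2c[of d] cut_le_tailst[OF Pf d] unfolding T_def by auto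
    ultimately have "dplus F d T = kb x d - kb b d + k1 d + k2 d"
      unfolding q_def by (simp add: pderiv_add pderiv_pCons)
    also have "\<dots> = 0" unfolding kbD[OF x d] kbD[OF b d] k1_def k2_def by simp
    finally show "dplus F d (tailst G P d) = 0" unfolding T_def .
  qed
  show ?thesis using om lapd unfolding P_def by blast
qed


lemma pair_pt_eq:
  assumes pot: "is_pot \<mu> g GP" and x: "valid_pt G x" and b: "valid_pt G b"
  shows "pair_pt G x b \<mu> = g x - g b"
proof -
  have ex: "\<exists>F. omega_logP G {x, b} F \<and> lap_is_dipole G x b F" by (rule F_exists[OF x b])
  define F where "F = (SOME F. omega_logP G {x, b} F \<and> lap_is_dipole G x b F)"
  have "omega_logP G {x, b} F \<and> lap_is_dipole G x b F" unfolding F_def by (rule someI_ex[OF ex])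
  hence "integP G {x, b} F \<mu> = g x - g b" using green[OF pot x b] by blast
  thus ?thesis unfolding pair_pt_def F_def[symmetric] .
qed

lemma main:
  assumes mu: "\<mu> \<in> M0 G" and b: "valid_pt G b"
  shows "omega_log G (\<lambda>x. pair_pt G x b \<mu>) \<and> lap G (\<lambda>x. pair_pt G x b \<mu>) = \<mu>"
proof -
  have meas: "is_meas G \<mu>" and tm: "total_mass G \<mu> = 0" using mu unfolding M0_def by auto
  obtain g GP where pot: "is_pot \<mu> g GP" using pot_exists[OF meas tm] by blast
  have GPE: "\<And>e s. e \<in> E \<Longrightarrow> 0 \<le> s \<Longrightarrow> s \<le> L e \<Longrightarrow> g (Ep e s) = poly (GP e) s"
    and GPD: "\<And>d s. d \<in> D \<Longrightarrow> 0 \<le> s \<Longrightarrow> g (Ep d s) = poly (GP d) s"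
    and GP0: "\<And>e. e \<in> E \<union> D \<Longrightarrow> poly (GP e) 0 = g (Vx (src G e))"
    and GPi: "\<And>e. e \<in> E \<Longrightarrow> GP (iv e) = pcompose (GP e) [:L e, -1:]"
    and GP2E: "\<And>e. e \<in> E \<Longrightarrow> - pderiv (pderiv (GP e)) = dens \<mu> e"
    and GP2D: "\<And>d. d \<in> D \<Longrightarrow> pderiv (pderiv (GP d)) = 0 \<and> poly (pderiv (GP d)) 0 = hm \<mu> d"
    and GPv: "\<And>v. v \<in> V \<Longrightarrow> vm \<mu> v = - (\<Sum>e\<in>{e \<in> E \<union> D. src G e = v}. poly (pderiv (GP e)) 0)"
    using pot unfolding is_pot_def by auto
  define f where "f x = pair_pt G x b \<mu>" for x
  have fv: "\<And>z. valid_pt G z \<Longrightarrow> f z = g z - g b" unfolding f_def using pair_pt_eq[OF pot _ b] by blast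
  define c where "c = g b"
  have fE: "f (Ep e s) = poly (GP e - [:c:]) s" if "e \<in> E" "0 \<le> s" "s \<le> L e" for e s
    using fv[of "Ep e s"] GPE[OF that] that unfolding c_def by simp
  have fD: "f (Ep d s) = poly (GP d - [:c:]) s" if "d \<in> D" "0 \<le> s" for d s
    using fv[of "Ep d s"] GPD[OF that] that unfolding c_def by simp
  have fV: "f (Vx v) = g (Vx v) - c" if "v \<in> V" for v using fv[of "Vx v"] that unfolding c_def by simp
  have resp: "resp G f"
    unfolding resp_def
  proof (intro conjI ballI allI impI)
    fix e assume e: "e \<in> E \<union> D"
    have "f (Ep e 0) = poly (GP e - [:c:]) 0" using fE[of e 0] fD[of e 0] e len_pos[of e] by (auto simp: less_imp_le)
    thus "f (Ep e 0) = f (Vx (src G e))" using GP0[OF e] fV[OF src_in[OF e]] by simp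
  next
    fix e t assume e: "e \<in> E" and t: "0 \<le> t \<and> t \<le> L e"
    have ie: "iv e \<in> E" "L (iv e) = L e" using inv_in[OF e] len_inv[OF e] by auto
    show "f (Ep e t) = f (Ep (iv e) (L e - t))"
      using fE[OF e, of t] fE[OF ie(1), of "L e - t"] GPi[OF e] t ie by simp
  qed
  have om: "omega_log G f"
    unfolding omega_log_def omega_logP_def
  proof (intro conjI ballI)
    show "resp G f" by (rule resp)
  next
    fix e ac assume e: "e \<in> E" and ac: "ac \<in> consec (ecuts G {} e)"
    obtain a c' where acp: "ac = (a, c')" by (cases ac)
    have "a \<in> ecuts G {} e" "c' \<in> ecuts G {} e" using ac acp unfolding consec_def by auto
    hence "\<forall>s. a \<le> s \<and> s \<le> c' \<longrightarrow> f (Ep e s) = poly (GP e - [:c:]) s"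
      using fE[OF e] ecuts_range[OF e] by (meson order_trans)
    hence "\<exists>p. \<forall>s. a \<le> s \<and> s \<le> c' \<longrightarrow> f (Ep e s) = poly p s" by blast
    thus "case ac of (a, c') \<Rightarrow> \<exists>p. \<forall>s. a \<le> s \<and> s \<le> c' \<longrightarrow> f (Ep e s) = poly p s" using acp by simp
  next
    fix d ac assume d: "d \<in> D" and ac: "ac \<in> consec ({0} \<union> cuts G {} d)"
    obtain a c' where acp: "ac = (a, c')" by (cases ac)
    have "a \<in> {0} \<union> cuts G {} d" using ac acp unfolding consec_def by auto
    hence "0 \<le> a" using cuts_range[of a "{}" d] by auto
    hence "\<forall>s. a \<le> s \<and> s \<le> c' \<longrightarrow> f (Ep d s) = poly (GP d - [:c:]) s"
      using fD[OF d] by auto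
    hence "\<exists>p. \<forall>s. a \<le> s \<and> s \<le> c' \<longrightarrow> f (Ep d s) = poly p s" by blast
    thus "case ac of (a, c') \<Rightarrow> \<exists>p. \<forall>s. a \<le> s \<and> s \<le> c' \<longrightarrow> f (Ep d s) = poly p s" using acp by simp
  next
    fix d assume d: "d \<in> D"
    have T0: "0 \<le> tailst G {} d" using hcuts_facts[of "{}" d] d by simp
    have lin: "poly (GP d) s = poly (GP d) 0 + poly (pderiv (GP d)) 0 * s" for s
      using pderiv2_zero_linear GP2D[OF d] by blast
    have "\<forall>s. tailst G {} d \<le> s \<longrightarrow> f (Ep d s) = (poly (GP d) 0 - c) + poly (pderiv (GP d)) 0 * s"
    proof (intro allI impI)
      fix s assume "tailst G {} d \<le> s"
      hence s0: "0 \<le> s" using T0 by simp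
      have "f (Ep d s) = poly (GP d) s - c" using fD[OF d s0] by simp
      also have "\<dots> = (poly (GP d) 0 - c) + poly (pderiv (GP d)) 0 * s" using lin[of s] by simp
      finally show "f (Ep d s) = (poly (GP d) 0 - c) + poly (pderiv (GP d)) 0 * s" .
    qed
    thus "\<exists>\<alpha> \<beta>. \<forall>s. tailst G {} d \<le> s \<longrightarrow> f (Ep d s) = \<alpha> + \<beta> * s" by blast
  qed
  have fpE: "fpoly G f e = GP e - [:c:]" if "e \<in> E" for e
    by (rule fpoly_edge[OF that len_pos[OF that]]) (use fE[OF that] in auto)
  have fpD: "fpoly G f d = GP d - [:c:]" if "d \<in> D" for d
    by (rule fpoly_hedge) (use fD[OF that] hedge_notE[OF that] in auto)
  have fp: "poly (pderiv (fpoly G f e)) 0 = poly (pderiv (GP e)) 0" if "e \<in> E \<union> D" for e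
    using fpE fpD that by (auto simp: pderiv_diff)
  have lp: "lap G f = \<mu>"
  proof (rule meas.equality)
    show "dens (lap G f) = dens \<mu>"
    proof
      fix e show "dens (lap G f) e = dens \<mu> e"
        using fpE GP2E meas unfolding lap_def is_meas_def by (auto simp: pderiv_diff)
    qed
    show "vm (lap G f) = vm \<mu>"
    proof
      fix v show "vm (lap G f) v = vm \<mu> v"
      proof (cases "v \<in> V")
        case True
        have "(\<Sum>e\<in>{e \<in> E \<union> D. src G e = v}. poly (pderiv (fpoly G f e)) 0)
          = (\<Sum>e\<in>{e \<in> E \<union> D. src G e = v}. poly (pderiv (GP e)) 0)"
          using fp by (intro sum.cong refl) auto
        then show ?thesis using True GPv[OF True] unfolding lap_def by simp
      next
        case False
        then show ?thesis using meas unfolding lap_def is_meas_def by simp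
      qed
    qed
    show "hm (lap G f) = hm \<mu>"
    proof
      fix e show "hm (lap G f) e = hm \<mu> e"
        using fp GP2D meas unfolding lap_def is_meas_def by auto
    qed
  qed simp
  show ?thesis using om lp unfolding f_def by simp
qed

end

theorem lemma7p10:
  fixes G :: "('v, 'e) rmg" and \<mu> :: "('v, 'e) meas" and b :: "('v, 'e) pt"
  assumes "rm_graph G"
    and "\<mu> \<in> M0 G"
    and "valid_pt G b"
  shows "omega_log G (\<lambda>x. pair_pt G x b \<mu>) \<and> lap G (\<lambda>x. pair_pt G x b \<mu>) = \<mu>"
proof -
  interpret rmg_loc G by (rule rmg_loc.intro[OF assms(1)])
  show ?thesis by (rule main[OF assms(2,3)])
qed

end
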